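(* Let $\mathcal H$ be a finite-dimensional Hilbert space, let $P$ be an orthogonal projection on $\mathcal H$, and let $\mathcal E$ be a channel on $\mathcal L(\mathcal H)$ with operation elements $\{E_a\}$, i.e. $\mathcal E(\rho)=\sum_a E_a\rho E_a^\dagger$ with $\sum_a E_a^\dagger E_a={\bf 1}$. Let $\mathcal A$ be a subalgebra of $\mathcal L(P\mathcal H)$ closed under Hermitian conjugation, where operators on $P\mathcal H$ are regarded as operators $X$ on $\mathcal H$ with $X=PXP$ ($\mathcal A$ need not contain $P$). Then $\mathcal A$ is correctable for $\mathcal E$ on states in $P\mathcal H$, i.e. there exists a channel $\mathcal R$ on $\mathcal L(\mathcal H)$ such that $$P\,(\mathcal R\circ\mathcal E)^\dagger(X)\,P = PXP\quad\text{for all }X\in\mathcal A,$$ if and only if $$[P E_c^\dagger E_b P,\, X]=0\quad\text{for all } X\in\mathcal A \text{ and all indices } b,c.$$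
   Context: $\mathcal L(\mathcal K)$ denotes the set of all linear operators on a Hilbert space $\mathcal K$. A channel is a completely positive trace-preserving linear map on $\mathcal L(\mathcal H)$; for a channel $\mathcal F(\rho)=\sum_a F_a\rho F_a^\dagger$ its dual (Heisenberg-picture) map is $\mathcal F^\dagger(X)=\sum_a F_a^\dagger X F_a$, characterized by $\mathrm{Tr}(\rho\,\mathcal F^\dagger(X))=\mathrm{Tr}(\mathcal F(\rho)X)$; in particular $(\mathcal R\circ\mathcal E)^\dagger=\mathcal E^\dagger\circ\mathcal R^\dagger$. *)

theory Defs
  imports "Jordan_Normal_Form.Schur_Decomposition"
begin

text \<open>The Hilbert space H is C^n; operators on H are n x n complex matrices
(carrier_mat n n). Hermitian conjugation is mat_adjoint.\<close>

definition msum :: "nat \<Rightarrow> complex mat list \<Rightarrow> complex mat" where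
  "msum n xs = foldr (+) xs (0\<^sub>m n n)"

definition mtrace :: "complex mat \<Rightarrow> complex" where
  "mtrace A = (\<Sum>i < dim_row A. A $$ (i, i))"

definition psd :: "nat \<Rightarrow> complex mat \<Rightarrow> bool" where
  "psd n M \<longleftrightarrow> M \<in> carrier_mat n n \<and> mat_adjoint M = M \<and>
     (\<forall>v \<in> carrier_vec n. 0 \<le> Re (conjugate v \<bullet> (M *\<^sub>v v)))"

text \<open>Ampliation id_k tensor Phi, acting blockwise on (k n) x (k n) matrices.\<close>
definition ampl :: "nat \<Rightarrow> nat \<Rightarrow> (complex mat \<Rightarrow> complex mat) \<Rightarrow> complex mat \<Rightarrow> complex mat" where
  "ampl k n \<Phi> M = mat (k * n) (k * n) (\<lambda>(p, q).
      \<Phi> (mat n n (\<lambda>(r, s). M $$ (p div n * n + r, q div n * n + s))) $$ (p mod n, q mod n))"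

definition linear_map_mat :: "nat \<Rightarrow> (complex mat \<Rightarrow> complex mat) \<Rightarrow> bool" where
  "linear_map_mat n \<Phi> \<longleftrightarrow>
     (\<forall>A \<in> carrier_mat n n. \<Phi> A \<in> carrier_mat n n) \<and>
     (\<forall>A \<in> carrier_mat n n. \<forall>B \<in> carrier_mat n n. \<Phi> (A + B) = \<Phi> A + \<Phi> B) \<and>
     (\<forall>c. \<forall>A \<in> carrier_mat n n. \<Phi> (c \<cdot>\<^sub>m A) = c \<cdot>\<^sub>m \<Phi> A)"

definition completely_positive :: "nat \<Rightarrow> (complex mat \<Rightarrow> complex mat) \<Rightarrow> bool" where
  "completely_positive n \<Phi> \<longleftrightarrow>
     (\<forall>k M. psd (k * n) M \<longrightarrow> psd (k * n) (ampl k n \<Phi> M))"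

definition trace_preserving :: "nat \<Rightarrow> (complex mat \<Rightarrow> complex mat) \<Rightarrow> bool" where
  "trace_preserving n \<Phi> \<longleftrightarrow> (\<forall>A \<in> carrier_mat n n. mtrace (\<Phi> A) = mtrace A)"

definition channel :: "nat \<Rightarrow> (complex mat \<Rightarrow> complex mat) \<Rightarrow> bool" where
  "channel n \<Phi> \<longleftrightarrow> linear_map_mat n \<Phi> \<and> completely_positive n \<Phi> \<and> trace_preserving n \<Phi>"

definition dual_map :: "nat \<Rightarrow> (complex mat \<Rightarrow> complex mat) \<Rightarrow> complex mat \<Rightarrow> complex mat" where
  "dual_map n \<Phi> X = (THE Y. Y \<in> carrier_mat n n \<and>
      (\<forall>\<rho> \<in> carrier_mat n n. mtrace (\<rho> * Y) = mtrace (\<Phi> \<rho> * X)))"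

definition kraus_map :: "nat \<Rightarrow> complex mat list \<Rightarrow> complex mat \<Rightarrow> complex mat" where
  "kraus_map n Es \<rho> = msum n (map (\<lambda>E. E * \<rho> * mat_adjoint E) Es)"

definition orth_proj :: "nat \<Rightarrow> complex mat \<Rightarrow> bool" where
  "orth_proj n P \<longleftrightarrow> P \<in> carrier_mat n n \<and> P * P = P \<and> mat_adjoint P = P"

definition star_subalgebra_on :: "nat \<Rightarrow> complex mat \<Rightarrow> complex mat set \<Rightarrow> bool" where
  "star_subalgebra_on n P \<A> \<longleftrightarrow>
     \<A> \<subseteq> carrier_mat n n \<and>
     (\<forall>X \<in> \<A>. P * X * P = X) \<and>
     0\<^sub>m n n \<in> \<A> \<and>
     (\<forall>X \<in> \<A>. \<forall>Y \<in> \<A>. X + Y \<in> \<A>) \<and>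
     (\<forall>c. \<forall>X \<in> \<A>. c \<cdot>\<^sub>m X \<in> \<A>) \<and>
     (\<forall>X \<in> \<A>. \<forall>Y \<in> \<A>. X * Y \<in> \<A>) \<and>
     (\<forall>X \<in> \<A>. mat_adjoint X \<in> \<A>)"

end

theory Submission
  imports Defs "Jordan_Normal_Form.Spectral_Radius"
begin

type_synonym cmat = "complex mat"

lemma adj_dims[simp]: "dim_row (mat_adjoint A) = dim_col A" "dim_col (mat_adjoint A) = dim_row A"
  unfolding mat_adjoint_def by (auto simp: mat_of_rows_def)

lemma adj_index[simp]: "i < dim_col A \<Longrightarrow> j < dim_row A \<Longrightarrow> mat_adjoint A $$ (i,j) = cnj (A $$ (j,i))"
  unfolding mat_adjoint_def by (simp add: mat_of_rows_def conjugate_complex_def)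

lemma adj_carrier[simp]: "A \<in> carrier_mat r c \<Longrightarrow> mat_adjoint A \<in> carrier_mat c r"
  unfolding carrier_mat_def by simp

lemma mult_index_sum: "i < dim_row A \<Longrightarrow> j < dim_col B \<Longrightarrow> dim_col A = dim_row B \<Longrightarrow>
  (A * B) $$ (i,j) = (\<Sum>k<dim_row B. A $$ (i,k) * B $$ (k,j))"
  by (simp add: scalar_prod_def atLeast0LessThan)

lemma mult_index_sum': "A \<in> carrier_mat r m \<Longrightarrow> B \<in> carrier_mat m c \<Longrightarrow> i < r \<Longrightarrow> j < c \<Longrightarrow>
  (A * B) $$ (i,j) = (\<Sum>k<m. A $$ (i,k) * B $$ (k,j))"
  by (simp add: scalar_prod_def atLeast0LessThan)

lemma adj_adj[simp]: "mat_adjoint (mat_adjoint (A::cmat)) = A"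
  by (rule eq_matI) auto

lemma adj_mult: "(A::cmat) \<in> carrier_mat r k \<Longrightarrow> B \<in> carrier_mat k c \<Longrightarrow>
   mat_adjoint (A * B) = mat_adjoint B * mat_adjoint A"
  by (rule eq_matI) (auto simp: mult_index_sum mult.commute sum_conjugate simp del: index_mult_mat(1))

lemma adj_add: "(A::cmat) \<in> carrier_mat r c \<Longrightarrow> B \<in> carrier_mat r c \<Longrightarrow>
   mat_adjoint (A + B) = mat_adjoint A + mat_adjoint B"
  by (rule eq_matI) auto

lemma adj_minus: "(A::cmat) \<in> carrier_mat r c \<Longrightarrow> B \<in> carrier_mat r c \<Longrightarrow>
   mat_adjoint (A - B) = mat_adjoint A - mat_adjoint B"
  by (rule eq_matI) auto

lemma adj_smult: "mat_adjoint (a \<cdot>\<^sub>m (A::cmat)) = cnj a \<cdot>\<^sub>m mat_adjoint A"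
  by (rule eq_matI) auto

lemma adj_one[simp]: "mat_adjoint (1\<^sub>m n :: cmat) = 1\<^sub>m n"
  by (rule eq_matI) auto

lemma adj_zero[simp]: "mat_adjoint (0\<^sub>m r c :: cmat) = 0\<^sub>m c r"
  by (rule eq_matI) auto

lemma mtrace_comm: assumes "(A::cmat) \<in> carrier_mat r c" "B \<in> carrier_mat c r" shows
   "mtrace (A * B) = mtrace (B * A)"
proof -
  have "mtrace (A * B) = (\<Sum>i<r. \<Sum>k<c. A $$ (i,k) * B $$ (k,i))"
    using assms unfolding mtrace_def by (auto simp: mult_index_sum simp del: index_mult_mat(1))
  also have "\<dots> = (\<Sum>k<c. \<Sum>i<r. B $$ (k,i) * A $$ (i,k))"
    by (subst sum.swap) (simp add: mult.commute)
  also have "\<dots> = mtrace (B * A)"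
    using assms unfolding mtrace_def by (auto simp: mult_index_sum simp del: index_mult_mat(1))
  finally show ?thesis .
qed

lemma mtrace_add: "(A::cmat) \<in> carrier_mat n n \<Longrightarrow> B \<in> carrier_mat n n \<Longrightarrow>
   mtrace (A + B) = mtrace A + mtrace B"
  unfolding mtrace_def by (auto simp: sum.distrib)

lemma mtrace_smult: "(A::cmat) \<in> carrier_mat n n \<Longrightarrow> mtrace (a \<cdot>\<^sub>m A) = a * mtrace A"
  unfolding mtrace_def by (simp add: sum_distrib_left)

lemma mtrace_zero[simp]: "mtrace (0\<^sub>m n n :: cmat) = 0"
  unfolding mtrace_def by auto

lemma mult_sq[simp]: "A \<in> carrier_mat n n \<Longrightarrow> B \<in> carrier_mat n n \<Longrightarrow> A * B \<in> carrier_mat n n"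
  by (rule mult_carrier_mat)

lemma assoc_sq[simp]: "A \<in> carrier_mat n n \<Longrightarrow> B \<in> carrier_mat n n \<Longrightarrow> C \<in> carrier_mat n n \<Longrightarrow> A * B * C = A * (B * C)"
  by (rule assoc_mult_mat)

lemma msum_Nil[simp]: "msum n [] = 0\<^sub>m n n" unfolding msum_def by simp
lemma msum_Cons[simp]: "msum n (x # xs) = x + msum n xs" unfolding msum_def by simp

lemma msum_carrier[simp]: assumes "\<And>x. x \<in> set xs \<Longrightarrow> x \<in> carrier_mat n n" shows "msum n xs \<in> carrier_mat n n"
  using assms by (induct xs) auto

lemma msum_map_carrier: assumes "\<And>x. x \<in> set xs \<Longrightarrow> f x \<in> carrier_mat n n" shows "msum n (map f xs) \<in> carrier_mat n n"
  by (rule msum_carrier) (use assms in auto)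

lemma msum_index: assumes "\<And>x. x \<in> set xs \<Longrightarrow> x \<in> carrier_mat n n" "i < n" "j < n" shows
   "msum n xs $$ (i,j) = sum_list (map (\<lambda>x. x $$ (i,j)) xs)"
  using assms(1)
proof (induct xs)
  case Nil then show ?case using assms by simp
next
  case (Cons x xs)
  have c: "msum n xs \<in> carrier_mat n n" "x \<in> carrier_mat n n" using Cons by auto
  have ih: "msum n xs $$ (i,j) = sum_list (map (\<lambda>x. x $$ (i,j)) xs)" using Cons by auto
  show ?case using c ih assms(2,3) by (simp add: carrier_matD)
qed

declare minus_carrier_mat[simp]

lemma msum_map_carrier'[simp]: "\<forall>x\<in>set xs. f x \<in> carrier_mat n n \<Longrightarrow> msum n (map f xs) \<in> carrier_mat n n"
  by (rule msum_map_carrier) auto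

lemma msum_map_index: assumes "\<And>x. x \<in> set xs \<Longrightarrow> f x \<in> carrier_mat n n" "i < n" "j < n" shows
   "msum n (map f xs) $$ (i,j) = (\<Sum>x\<leftarrow>xs. f x $$ (i,j))"
  by (subst msum_index[OF _ assms(2,3)]) (use assms(1) in \<open>auto simp: comp_def\<close>)

lemma msum_append: assumes "\<And>x. x \<in> set xs \<Longrightarrow> x \<in> carrier_mat n n" "\<And>x. x \<in> set ys \<Longrightarrow> x \<in> carrier_mat n n" shows
   "msum n (xs @ ys) = msum n xs + msum n ys"
  using assms
proof (induct xs)
  case Nil then show ?case by (simp add: msum_carrier)
next
  case (Cons x xs)
  have c: "msum n xs \<in> carrier_mat n n" "msum n ys \<in> carrier_mat n n" "x \<in> carrier_mat n n" using Cons by auto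
  have ih: "msum n (xs @ ys) = msum n xs + msum n ys" using Cons by auto
  show ?case using c ih by (simp add: assoc_add_mat)
qed

lemma msum_mult_left:
  assumes "Y \<in> carrier_mat n n" "\<And>x. x \<in> set xs \<Longrightarrow> f x \<in> carrier_mat n n"
  shows "Y * msum n (map f xs) = msum n (map (\<lambda>x. Y * f x) xs)"
  using assms(2)
proof (induct xs)
  case Nil then show ?case using assms(1) by simp
next
  case (Cons x xs)
  have c: "msum n (map f xs) \<in> carrier_mat n n" "f x \<in> carrier_mat n n" using Cons by (auto intro!: msum_map_carrier)
  have ih: "Y * msum n (map f xs) = msum n (map (\<lambda>x. Y * f x) xs)" using Cons by auto
  show ?case using c ih assms(1) by (simp add: mult_add_distrib_mat)
qed

lemma msum_mult_right:
  assumes "Y \<in> carrier_mat n n" "\<And>x. x \<in> set xs \<Longrightarrow> f x \<in> carrier_mat n n"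
  shows "msum n (map f xs) * Y = msum n (map (\<lambda>x. f x * Y) xs)"
  using assms(2)
proof (induct xs)
  case Nil then show ?case using assms(1) by simp
next
  case (Cons x xs)
  have c: "msum n (map f xs) \<in> carrier_mat n n" "f x \<in> carrier_mat n n" using Cons by (auto intro!: msum_map_carrier)
  have ih: "msum n (map f xs) * Y = msum n (map (\<lambda>x. f x * Y) xs)" using Cons by auto
  show ?case using c ih assms(1) by (simp add: add_mult_distrib_mat)
qed

lemma msum_add:
  assumes f: "\<And>x. x \<in> set xs \<Longrightarrow> f x \<in> carrier_mat n n" and g: "\<And>x. x \<in> set xs \<Longrightarrow> g x \<in> carrier_mat n n"
  shows "msum n (map (\<lambda>x. f x + g x) xs) = msum n (map f xs) + msum n (map g xs)"
proof -
  have fg: "\<And>x. x \<in> set xs \<Longrightarrow> f x + g x \<in> carrier_mat n n" using f g by auto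
  have c: "msum n (map f xs) \<in> carrier_mat n n" "msum n (map g xs) \<in> carrier_mat n n"
     "msum n (map (\<lambda>x. f x + g x) xs) \<in> carrier_mat n n"
    using f g fg by (auto intro!: msum_map_carrier)
  show ?thesis
  proof (rule eq_matI)
    fix i j assume "i < dim_row (msum n (map f xs) + msum n (map g xs))" "j < dim_col (msum n (map f xs) + msum n (map g xs))"
    then have ij: "i < n" "j < n" using c by auto
    have e: "(f x + g x) $$ (i,j) = f x $$ (i,j) + g x $$ (i,j)" if "x \<in> set xs" for x
      using f[OF that] g[OF that] ij by auto
    show "msum n (map (\<lambda>x. f x + g x) xs) $$ (i, j) = (msum n (map f xs) + msum n (map g xs)) $$ (i, j)"
      using c ij by (simp add: msum_map_index[OF fg ij] msum_map_index[OF f ij] msum_map_index[OF g ij] sum_list_addf e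
          cong: map_cong)
  qed (use c in auto)
qed

lemma msum_minus:
  assumes f: "\<And>x. x \<in> set xs \<Longrightarrow> f x \<in> carrier_mat n n" and g: "\<And>x. x \<in> set xs \<Longrightarrow> g x \<in> carrier_mat n n"
  shows "msum n (map (\<lambda>x. f x - g x) xs) = msum n (map f xs) - msum n (map g xs)"
proof -
  have fg: "\<And>x. x \<in> set xs \<Longrightarrow> f x - g x \<in> carrier_mat n n" using f g by auto
  have c: "msum n (map f xs) \<in> carrier_mat n n" "msum n (map g xs) \<in> carrier_mat n n"
     "msum n (map (\<lambda>x. f x - g x) xs) \<in> carrier_mat n n"
    using f g fg by (auto intro!: msum_map_carrier)
  show ?thesis
  proof (rule eq_matI)
    fix i j assume "i < dim_row (msum n (map f xs) - msum n (map g xs))" "j < dim_col (msum n (map f xs) - msum n (map g xs))"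
    then have ij: "i < n" "j < n" using c by auto
    have e: "(f x - g x) $$ (i,j) = f x $$ (i,j) - g x $$ (i,j)" if "x \<in> set xs" for x
      using f[OF that] g[OF that] ij by auto
    show "msum n (map (\<lambda>x. f x - g x) xs) $$ (i, j) = (msum n (map f xs) - msum n (map g xs)) $$ (i, j)"
      using c ij by (simp add: msum_map_index[OF fg ij] msum_map_index[OF f ij] msum_map_index[OF g ij] sum_list_subtractf e
          cong: map_cong)
  qed (use c in auto)
qed

lemma msum_smult:
  assumes f: "\<And>x. x \<in> set xs \<Longrightarrow> f x \<in> carrier_mat n n"
  shows "msum n (map (\<lambda>x. a \<cdot>\<^sub>m f x) xs) = a \<cdot>\<^sub>m msum n (map f xs)"
proof -
  have fg: "\<And>x. x \<in> set xs \<Longrightarrow> a \<cdot>\<^sub>m f x \<in> carrier_mat n n" using f by auto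
  have c: "msum n (map f xs) \<in> carrier_mat n n" "msum n (map (\<lambda>x. a \<cdot>\<^sub>m f x) xs) \<in> carrier_mat n n"
    using f fg by auto
  show ?thesis
  proof (rule eq_matI)
    fix i j assume "i < dim_row (a \<cdot>\<^sub>m msum n (map f xs))" "j < dim_col (a \<cdot>\<^sub>m msum n (map f xs))"
    then have ij: "i < n" "j < n" using c by auto
    have e: "(a \<cdot>\<^sub>m f x) $$ (i,j) = a * f x $$ (i,j)" if "x \<in> set xs" for x
      using f[OF that] ij by auto
    show "msum n (map (\<lambda>x. a \<cdot>\<^sub>m f x) xs) $$ (i, j) = (a \<cdot>\<^sub>m msum n (map f xs)) $$ (i, j)"
      using c ij by (simp add: msum_map_index[OF fg ij] msum_map_index[OF f ij] sum_list_const_mult e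
          cong: map_cong)
  qed (use carrier_matD[OF c(1)] carrier_matD[OF c(2)] in auto)
qed

lemma msum_adj:
  assumes f: "\<And>x. x \<in> set xs \<Longrightarrow> f x \<in> carrier_mat n n"
  shows "mat_adjoint (msum n (map f xs)) = msum n (map (\<lambda>x. mat_adjoint (f x)) xs)"
proof -
  have fa: "\<And>x. x \<in> set xs \<Longrightarrow> mat_adjoint (f x) \<in> carrier_mat n n" using f by auto
  have c: "msum n (map f xs) \<in> carrier_mat n n" "msum n (map (\<lambda>x. mat_adjoint (f x)) xs) \<in> carrier_mat n n"
    using f fa by auto
  have cs: "cnj (sum_list (map g xs)) = sum_list (map (\<lambda>x. cnj (g x)) xs)" for g :: "_ \<Rightarrow> complex"
    by (induct xs) auto
  show ?thesis
  proof (rule eq_matI)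
    fix i j assume "i < dim_row (msum n (map (\<lambda>x. mat_adjoint (f x)) xs))" "j < dim_col (msum n (map (\<lambda>x. mat_adjoint (f x)) xs))"
    then have ij: "i < n" "j < n" using c by auto
    have e: "mat_adjoint (f x) $$ (i,j) = cnj (f x $$ (j,i))" if "x \<in> set xs" for x
      using f[OF that] ij by auto
    show "mat_adjoint (msum n (map f xs)) $$ (i, j) = msum n (map (\<lambda>x. mat_adjoint (f x)) xs) $$ (i, j)"
      using c ij by (simp add: msum_map_index[OF fa ij] msum_map_index[OF f ij(2,1)] e cs cong: map_cong)
  qed (use c in auto)
qed

lemma mtrace_msum:
  assumes "\<And>x. x \<in> set xs \<Longrightarrow> f x \<in> carrier_mat n n"
  shows "mtrace (msum n (map f xs)) = sum_list (map (\<lambda>x. mtrace (f x)) xs)"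
  using assms
proof (induct xs)
  case Nil then show ?case by simp
next
  case (Cons x xs)
  have c: "msum n (map f xs) \<in> carrier_mat n n" "f x \<in> carrier_mat n n" using Cons by (auto intro!: msum_map_carrier)
  have ih: "mtrace (msum n (map f xs)) = sum_list (map (\<lambda>x. mtrace (f x)) xs)" using Cons by auto
  show ?case using c ih by (simp add: mtrace_add)
qed

lemma msum_cong: "(\<And>x. x \<in> set xs \<Longrightarrow> f x = g x) \<Longrightarrow> msum n (map f xs) = msum n (map g xs)"
  by (metis map_eq_conv)

lemma msum_swap:
  assumes g: "\<And>x y. x \<in> set xs \<Longrightarrow> y \<in> set ys \<Longrightarrow> g x y \<in> carrier_mat n n"
  shows "msum n (map (\<lambda>x. msum n (map (\<lambda>y. g x y) ys)) xs) = msum n (map (\<lambda>y. msum n (map (\<lambda>x. g x y) xs)) ys)"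
proof -
  have c1: "\<And>x. x \<in> set xs \<Longrightarrow> msum n (map (\<lambda>y. g x y) ys) \<in> carrier_mat n n" using g by auto
  have c2: "\<And>y. y \<in> set ys \<Longrightarrow> msum n (map (\<lambda>x. g x y) xs) \<in> carrier_mat n n" using g by auto
  have c3: "msum n (map (\<lambda>y. msum n (map (\<lambda>x. g x y) xs)) ys) \<in> carrier_mat n n"
     "msum n (map (\<lambda>x. msum n (map (\<lambda>y. g x y) ys)) xs) \<in> carrier_mat n n"
    using c1 c2 by auto
  have sw: "(\<Sum>x\<leftarrow>xs. \<Sum>y\<leftarrow>ys. h x y) = (\<Sum>y\<leftarrow>ys. \<Sum>x\<leftarrow>xs. h x y)" for h :: "_ \<Rightarrow> _ \<Rightarrow> complex"
    by (induct xs) (auto simp: sum_list_addf)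
  show ?thesis
  proof (rule eq_matI)
    fix i j assume "i < dim_row (msum n (map (\<lambda>y. msum n (map (\<lambda>x. g x y) xs)) ys))"
     "j < dim_col (msum n (map (\<lambda>y. msum n (map (\<lambda>x. g x y) xs)) ys))"
    then have ij: "i < n" "j < n" using c3 by auto
    have e1: "msum n (map (\<lambda>y. g x y) ys) $$ (i,j) = (\<Sum>y\<leftarrow>ys. g x y $$ (i,j))" if "x \<in> set xs" for x
      by (rule msum_map_index[OF _ ij]) (use g that in auto)
    have e2: "msum n (map (\<lambda>x. g x y) xs) $$ (i,j) = (\<Sum>x\<leftarrow>xs. g x y $$ (i,j))" if "y \<in> set ys" for y
      by (rule msum_map_index[OF _ ij]) (use g that in auto)
    show "msum n (map (\<lambda>x. msum n (map (\<lambda>y. g x y) ys)) xs) $$ (i, j) = msum n (map (\<lambda>y. msum n (map (\<lambda>x. g x y) xs)) ys) $$ (i, j)"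
      by (simp add: msum_map_index[OF c1 ij] msum_map_index[OF c2 ij] e1 e2 sw cong: map_cong)
  qed (use c3 in auto)
qed

lemma mtrace_msum'[simp]: "\<forall>x\<in>set xs. f x \<in> carrier_mat n n \<Longrightarrow>
  mtrace (msum n (map f xs)) = sum_list (map (\<lambda>x. mtrace (f x)) xs)"
  by (rule mtrace_msum) auto

definition kd :: "nat \<Rightarrow> cmat list \<Rightarrow> cmat \<Rightarrow> cmat" where
  "kd n Ks X = msum n (map (\<lambda>K. mat_adjoint K * X * K) Ks)"

lemma kraus_carrier[simp]: "\<forall>K\<in>set Ks. K \<in> carrier_mat n n \<Longrightarrow> \<rho> \<in> carrier_mat n n \<Longrightarrow>
   kraus_map n Ks \<rho> \<in> carrier_mat n n"
  unfolding kraus_map_def by (rule msum_map_carrier') auto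

lemma kd_carrier[simp]: "\<forall>K\<in>set Ks. K \<in> carrier_mat n n \<Longrightarrow> X \<in> carrier_mat n n \<Longrightarrow>
   kd n Ks X \<in> carrier_mat n n"
  unfolding kd_def by (rule msum_map_carrier') auto

lemma kraus_trace_dual:
  assumes kc: "\<forall>K\<in>set Ks. K \<in> carrier_mat n n" and r: "\<rho> \<in> carrier_mat n n" and x: "X \<in> carrier_mat n n"
  shows "mtrace (kraus_map n Ks \<rho> * X) = mtrace (\<rho> * kd n Ks X)"
proof -
  have "kraus_map n Ks \<rho> * X = msum n (map (\<lambda>K. K * \<rho> * mat_adjoint K * X) Ks)"
    unfolding kraus_map_def by (rule msum_mult_right[OF x]) (use kc r in auto)
  then have "mtrace (kraus_map n Ks \<rho> * X) = (\<Sum>K\<leftarrow>Ks. mtrace (K * \<rho> * mat_adjoint K * X))"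
    by (simp add: mtrace_msum kc r x)
  also have "\<dots> = (\<Sum>K\<leftarrow>Ks. mtrace (\<rho> * (mat_adjoint K * X * K)))"
  proof (rule arg_cong[where f=sum_list], rule map_cong[OF refl])
    fix K assume "K \<in> set Ks"
    then have k: "K \<in> carrier_mat n n" using kc by auto
    have "mtrace (K * \<rho> * mat_adjoint K * X) = mtrace (K * (\<rho> * mat_adjoint K * X))"
      using k r x by (simp add: assoc_mult_mat[of _ n n _ n _ n])
    also have "\<dots> = mtrace ((\<rho> * mat_adjoint K * X) * K)"
      by (rule mtrace_comm[of _ n n]) (use k r x in auto)
    also have "\<dots> = mtrace (\<rho> * (mat_adjoint K * X * K))"
      using k r x by (simp add: assoc_mult_mat[of _ n n _ n _ n])
    finally show "mtrace (K * \<rho> * mat_adjoint K * X) = mtrace (\<rho> * (mat_adjoint K * X * K))" .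
  qed
  also have "\<dots> = mtrace (\<rho> * kd n Ks X)"
  proof -
    have "\<rho> * kd n Ks X = msum n (map (\<lambda>K. \<rho> * (mat_adjoint K * X * K)) Ks)"
      unfolding kd_def by (rule msum_mult_left[OF r]) (use kc x in auto)
    then show ?thesis by (simp add: mtrace_msum kc r x)
  qed
  finally show ?thesis .
qed

definition unitm :: "nat \<Rightarrow> nat \<Rightarrow> nat \<Rightarrow> cmat" where
  "unitm n a b = mat n n (\<lambda>(r,s). if r = a \<and> s = b then 1 else 0)"

lemma unitm_carrier[simp]: "unitm n a b \<in> carrier_mat n n"
  unfolding unitm_def by simp

lemma mtrace_unitm: assumes y: "Y \<in> carrier_mat n n" and ij: "i < n" "j < n"
  shows "mtrace (unitm n j i * Y) = Y $$ (i,j)"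
proof -
  have e: "(unitm n j i * Y) $$ (r,r) = (if r = j then Y $$ (i,r) else 0)" if r: "r < n" for r
  proof -
    have "(unitm n j i * Y) $$ (r,r) = (\<Sum>k<n. unitm n j i $$ (r,k) * Y $$ (k,r))"
      by (rule mult_index_sum'[OF unitm_carrier y r r])
    also have "\<dots> = (\<Sum>k<n. if k = i then (if r = j then Y $$ (i,r) else 0) else 0)"
      using r by (intro sum.cong refl) (auto simp: unitm_def)
    also have "\<dots> = (if r = j then Y $$ (i,r) else 0)" using ij by simp
    finally show ?thesis .
  qed
  have "mtrace (unitm n j i * Y) = (\<Sum>r<n. (unitm n j i * Y) $$ (r,r))"
    unfolding mtrace_def by (simp add: unitm_def)
  also have "\<dots> = (\<Sum>r<n. if r = j then Y $$ (i, r) else 0)"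
    by (rule sum.cong) (auto simp: e)
  also have "\<dots> = Y $$ (i,j)" using ij by simp
  finally show ?thesis .
qed

lemma trace_ext: assumes "Y \<in> carrier_mat n n" "Y' \<in> carrier_mat n n"
  "\<forall>\<rho>\<in>carrier_mat n n. mtrace (\<rho> * Y) = mtrace (\<rho> * Y')"
  shows "Y = Y'"
proof (rule eq_matI)
  fix i j assume "i < dim_row Y'" "j < dim_col Y'"
  then have ij: "i < n" "j < n" using assms by auto
  show "Y $$ (i,j) = Y' $$ (i,j)"
    using assms(3)[rule_format, OF unitm_carrier[of n j i]] mtrace_unitm[OF assms(1) ij] mtrace_unitm[OF assms(2) ij]
    by simp
qed (use assms in auto)

lemma dual_map_char:
  assumes y: "Y \<in> carrier_mat n n" and h: "\<forall>\<rho>\<in>carrier_mat n n. mtrace (\<rho> * Y) = mtrace (\<Phi> \<rho> * X)"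
  shows "dual_map n \<Phi> X = Y"
  unfolding dual_map_def
proof (rule the_equality)
  show "Y \<in> carrier_mat n n \<and> (\<forall>\<rho>\<in>carrier_mat n n. mtrace (\<rho> * Y) = mtrace (\<Phi> \<rho> * X))" using y h by auto
next
  fix Y' assume "Y' \<in> carrier_mat n n \<and> (\<forall>\<rho>\<in>carrier_mat n n. mtrace (\<rho> * Y') = mtrace (\<Phi> \<rho> * X))"
  then show "Y' = Y" using y h by (intro trace_ext[of _ n]) auto
qed

lemma dual_comp_kraus:
  assumes kc: "\<forall>K\<in>set Ks. K \<in> carrier_mat n n" and ec: "\<forall>E\<in>set Es. E \<in> carrier_mat n n"
    and R: "\<forall>\<rho>\<in>carrier_mat n n. R \<rho> = kraus_map n Ks \<rho>" and x: "X \<in> carrier_mat n n"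
  shows "dual_map n (R \<circ> kraus_map n Es) X = kd n Es (kd n Ks X)"
proof (rule dual_map_char)
  show "kd n Es (kd n Ks X) \<in> carrier_mat n n" using kc ec x by simp
  show "\<forall>\<rho>\<in>carrier_mat n n. mtrace (\<rho> * kd n Es (kd n Ks X)) = mtrace ((R \<circ> kraus_map n Es) \<rho> * X)"
  proof
    fix \<rho> :: cmat assume r: "\<rho> \<in> carrier_mat n n"
    have e: "kraus_map n Es \<rho> \<in> carrier_mat n n" using ec r by simp
    have "mtrace ((R \<circ> kraus_map n Es) \<rho> * X) = mtrace (kraus_map n Ks (kraus_map n Es \<rho>) * X)"
      using R e by simp
    also have "\<dots> = mtrace (kraus_map n Es \<rho> * kd n Ks X)" by (rule kraus_trace_dual[OF kc e x])
    also have "\<dots> = mtrace (\<rho> * kd n Es (kd n Ks X))" by (rule kraus_trace_dual[OF ec r]) (use kc x in simp)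
    finally show "mtrace (\<rho> * kd n Es (kd n Ks X)) = mtrace ((R \<circ> kraus_map n Es) \<rho> * X)" by simp
  qed
qed

lemma cscalar_self: assumes x: "(x::complex vec) \<in> carrier_vec n"
  shows "x \<bullet>c x = complex_of_real (\<Sum>k<n. (cmod (x $ k))\<^sup>2)"
proof -
  have "x \<bullet>c x = (\<Sum>k<n. x $ k * cnj (x $ k))"
    using x by (simp add: scalar_prod_def atLeast0LessThan conjugate_complex_def)
  also have "\<dots> = (\<Sum>k<n. complex_of_real ((cmod (x $ k))\<^sup>2))"
    by (intro sum.cong refl) (simp only: complex_norm_square)
  finally show ?thesis by (simp only: of_real_sum)
qed

lemma cscalar_self_nonzero: assumes x: "(x::complex vec) \<in> carrier_vec n" and nz: "x \<bullet>c x \<noteq> 0"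
  shows "(\<Sum>k<n. (cmod (x $ k))\<^sup>2) > 0"
proof -
  have "(\<Sum>k<n. (cmod (x $ k))\<^sup>2) \<ge> 0" by (intro sum_nonneg) auto
  moreover have "(\<Sum>k<n. (cmod (x $ k))\<^sup>2) \<noteq> 0"
  proof
    assume "(\<Sum>k<n. (cmod (x $ k))\<^sup>2) = 0"
    then have "x \<bullet>c x = 0" using cscalar_self[OF x] by simp
    then show False using nz by simp
  qed
  ultimately show ?thesis by linarith
qed

lemma unitary_ext:
  fixes v :: "complex vec"
  assumes v: "v \<in> carrier_vec n" and v0: "v \<noteq> 0\<^sub>v n"
  shows "\<exists>W. W \<in> carrier_mat n n \<and> mat_adjoint W * W = 1\<^sub>m n \<and> W * mat_adjoint W = 1\<^sub>m n \<and>
    (\<exists>c. c \<noteq> 0 \<and> col W 0 = c \<cdot>\<^sub>v v)"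
proof -
  interpret cof_vec_space n "TYPE(complex)" .
  define b where "b = basis_completion v"
  from basis_completion[OF v v0, folded b_def]
  have dist_b: "distinct b" and indep: "\<not> lin_dep (set b)" and bc: "set b \<subseteq> carrier_vec n"
    and hdb: "hd b = v" and len_b: "length b = n" by auto
  have n: "n > 0"
  proof (rule ccontr)
    assume "\<not> n > 0" then have "n = 0" by auto
    then have "v = 0\<^sub>v n" using v by (intro eq_vecI) auto
    then show False using v0 by auto
  qed
  from hdb len_b n obtain vs where bv: "b = v # vs" by (cases b) auto
  define ws where "ws = gram_schmidt n b"
  from gram_schmidt_result[OF bc dist_b indep ws_def]
  have orth: "corthogonal ws" and wsc: "set ws \<subseteq> carrier_vec n" and lw: "length ws = n"
    using len_b by auto
  have hdw: "hd ws = v" unfolding ws_def bv by (rule gram_schmidt_hd[OF v])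
  have w0: "ws ! 0 = v" using hdw lw n by (cases ws) auto
  define s where "s i = sqrt (\<Sum>k<n. (cmod (ws ! i $ k))\<^sup>2)" for i
  have wic: "ws ! i \<in> carrier_vec n" if "i < n" for i using wsc lw that by auto
  have wnz: "ws ! i \<bullet>c ws ! i \<noteq> 0" if "i < n" for i using corthogonalD[OF orth, of i i] lw that by auto
  have spos: "s i > 0" if "i < n" for i
    unfolding s_def using cscalar_self_nonzero[OF wic[OF that] wnz[OF that]] by simp
  have ss: "ws ! i \<bullet>c ws ! i = complex_of_real (s i * s i)" if "i < n" for i
  proof -
    have "(\<Sum>k<n. (cmod (ws ! i $ k))\<^sup>2) \<ge> 0" by (intro sum_nonneg) auto
    then show ?thesis unfolding s_def cscalar_self[OF wic[OF that]] by simp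
  qed
  define W where "W = mat n n (\<lambda>(k,i). ws ! i $ k / complex_of_real (s i))"
  have Wc: "W \<in> carrier_mat n n" unfolding W_def by simp
  have WW: "mat_adjoint W * W = 1\<^sub>m n"
  proof (rule eq_matI)
    fix i j assume "i < dim_row (1\<^sub>m n :: complex mat)" "j < dim_col (1\<^sub>m n :: complex mat)"
    then have ij: "i < n" "j < n" by auto
    have "(mat_adjoint W * W) $$ (i,j) = (\<Sum>k<n. cnj (W $$ (k,i)) * W $$ (k,j))"
      by (subst mult_index_sum'[of _ n n _ n]) (use Wc ij in auto)
    also have "\<dots> = (\<Sum>k<n. ws ! j $ k * cnj (ws ! i $ k)) / complex_of_real (s i * s j)"
      using ij by (auto simp: W_def sum_divide_distrib intro!: sum.cong)
    also have "(\<Sum>k<n. ws ! j $ k * cnj (ws ! i $ k)) = ws ! j \<bullet>c ws ! i"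
      using wic[OF ij(1)] by (simp add: scalar_prod_def atLeast0LessThan conjugate_complex_def)
    finally have e: "(mat_adjoint W * W) $$ (i,j) = ws ! j \<bullet>c ws ! i / complex_of_real (s i * s j)" .
    show "(mat_adjoint W * W) $$ (i,j) = 1\<^sub>m n $$ (i,j)"
    proof (cases "i = j")
      case True
      then show ?thesis using e ss[OF ij(1)] spos[OF ij(1)] ij by simp
    next
      case False
      then have "ws ! j \<bullet>c ws ! i = 0" using corthogonalD[OF orth, of j i] lw ij by auto
      then show ?thesis using e False ij by simp
    qed
  qed (use Wc in auto)
  have WW': "W * mat_adjoint W = 1\<^sub>m n"
    by (rule mat_mult_left_right_inverse[OF _ Wc WW]) (use Wc in simp)
  have "col W 0 = (1 / complex_of_real (s 0)) \<cdot>\<^sub>v v"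
    by (rule eq_vecI) (use n Wc v w0 in \<open>auto simp: W_def\<close>)
  moreover have "1 / complex_of_real (s 0) \<noteq> 0" using spos[OF n] by simp
  ultimately show ?thesis using Wc WW WW' by blast
qed

lemma adj_four_block:
  assumes "(A::cmat) \<in> carrier_mat r1 c1" "B \<in> carrier_mat r1 c2" "C \<in> carrier_mat r2 c1" "D \<in> carrier_mat r2 c2"
  shows "mat_adjoint (four_block_mat A B C D) = four_block_mat (mat_adjoint A) (mat_adjoint C) (mat_adjoint B) (mat_adjoint D)"
  by (rule eq_matI) (use assms in auto)

lemma unitary_schur:
  assumes "(A::cmat) \<in> carrier_mat n n"
  shows "\<exists>U T. U \<in> carrier_mat n n \<and> T \<in> carrier_mat n n \<and> mat_adjoint U * U = 1\<^sub>m n \<and>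
     U * mat_adjoint U = 1\<^sub>m n \<and> upper_triangular T \<and> A = U * T * mat_adjoint U"
  using assms
proof (induct n arbitrary: A)
  case 0
  then have "A = 1\<^sub>m 0 * A * mat_adjoint (1\<^sub>m 0)" by simp
  moreover have "upper_triangular A" unfolding upper_triangular_def using 0 by auto
  ultimately show ?case using 0 by (intro exI[of _ "1\<^sub>m 0"] exI[of _ A]) auto
next
  case (Suc m A)
  let ?n = "Suc m"
  have A: "A \<in> carrier_mat ?n ?n" by fact
  from spectrum_non_empty[OF A] obtain e where "e \<in> spectrum A" by auto
  then obtain v where ev: "eigenvector A v e" unfolding spectrum_def eigenvalue_def by auto
  then have v: "v \<in> carrier_vec ?n" and v0: "v \<noteq> 0\<^sub>v ?n" and Av: "A *\<^sub>v v = e \<cdot>\<^sub>v v"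
    unfolding eigenvector_def using A by auto
  from unitary_ext[OF v v0] obtain W c where Wc: "W \<in> carrier_mat ?n ?n" and WW: "mat_adjoint W * W = 1\<^sub>m ?n"
    and WW': "W * mat_adjoint W = 1\<^sub>m ?n" and cW: "col W 0 = c \<cdot>\<^sub>v v" by blast
  define A' where "A' = mat_adjoint W * (A * W)"
  have A'c: "A' \<in> carrier_mat ?n ?n" unfolding A'_def using Wc A by simp
  have cv: "col W 0 \<in> carrier_vec ?n" using Wc unfolding carrier_vec_def carrier_mat_def by simp
  have colA': "col A' 0 = e \<cdot>\<^sub>v unit_vec ?n 0"
  proof -
    have AW: "A * W \<in> carrier_mat ?n ?n" using A Wc by simp
    have "col A' 0 = mat_adjoint W *\<^sub>v col (A * W) 0"
      unfolding A'_def by (rule col_mult2[OF adj_carrier[OF Wc] AW]) simp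
    also have "col (A * W) 0 = A *\<^sub>v col W 0" by (rule col_mult2[OF A Wc]) simp
    finally have "col A' 0 = mat_adjoint W *\<^sub>v (A *\<^sub>v col W 0)" .
    also have "A *\<^sub>v col W 0 = e \<cdot>\<^sub>v col W 0"
      unfolding cW using A v Av by (simp add: mult_mat_vec smult_smult_assoc mult.commute)
    also have "mat_adjoint W *\<^sub>v (e \<cdot>\<^sub>v col W 0) = e \<cdot>\<^sub>v (mat_adjoint W *\<^sub>v col W 0)"
      by (rule mult_mat_vec[of _ ?n ?n]) (use Wc cv in auto)
    also have "mat_adjoint W *\<^sub>v col W 0 = col (mat_adjoint W * W) 0"
      using Wc by (simp add: col_mult2[of _ ?n ?n _ ?n])
    also have "\<dots> = unit_vec ?n 0" unfolding WW by simp
    finally show ?thesis .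
  qed
  have A'0: "A' $$ (i,0) = (if i = 0 then e else 0)" if "i < ?n" for i
  proof -
    have "A' $$ (i,0) = col A' 0 $ i" using that A'c by simp
    then show ?thesis unfolding colA' using that by (auto simp: unit_vec_def)
  qed
  obtain A1 A2 A0 A3 where sp: "split_block A' 1 1 = (A1,A2,A0,A3)" by (cases "split_block A' 1 1") auto
  have dims: "dim_row A' = 1 + m" "dim_col A' = 1 + m" using A'c by auto
  note blk = split_block[OF sp dims]
  have A0z: "A0 = 0\<^sub>m m 1"
    using sp A'0 dims unfolding split_block_def Let_def by (auto intro!: eq_matI)
  have A1c: "A1 \<in> carrier_mat 1 1" and A2c: "A2 \<in> carrier_mat 1 m" and A3c: "A3 \<in> carrier_mat m m"
    using blk by auto
  from Suc(1)[OF A3c] obtain U3 T3 where U3c: "U3 \<in> carrier_mat m m" and T3c: "T3 \<in> carrier_mat m m"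
    and U3U3: "mat_adjoint U3 * U3 = 1\<^sub>m m" and U3U3': "U3 * mat_adjoint U3 = 1\<^sub>m m"
    and ut3: "upper_triangular T3" and A3e: "A3 = U3 * T3 * mat_adjoint U3" by blast
  define BD where "BD = four_block_mat (1\<^sub>m 1) (0\<^sub>m 1 m) (0\<^sub>m m 1) U3"
  define BDa where "BDa = four_block_mat (1\<^sub>m 1) (0\<^sub>m 1 m) (0\<^sub>m m 1) (mat_adjoint U3)"
  have BDc: "BD \<in> carrier_mat ?n ?n" unfolding BD_def using U3c four_block_carrier_mat[of "1\<^sub>m 1" 1 1 U3 m m] by simp
  have BDac: "BDa \<in> carrier_mat ?n ?n" unfolding BDa_def using U3c four_block_carrier_mat[of "1\<^sub>m 1" 1 1 "mat_adjoint U3" m m] by simp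
  have BDadj: "mat_adjoint BD = BDa" unfolding BD_def BDa_def
    by (subst adj_four_block) (use U3c in auto)
  have BDBD: "BDa * BD = 1\<^sub>m ?n" unfolding BD_def BDa_def
    by (subst mult_four_block_mat[of _ 1 1 _ m _ m _ _ 1 _ m _ _]) (use U3c U3U3 in auto)
  have BDBD': "BD * BDa = 1\<^sub>m ?n" unfolding BD_def BDa_def
    by (subst mult_four_block_mat[of _ 1 1 _ m _ m _ _ 1 _ m _ _]) (use U3c U3U3' in auto)
  define T where "T = four_block_mat A1 (A2 * U3) (0\<^sub>m m 1) T3"
  have Tc: "T \<in> carrier_mat ?n ?n" unfolding T_def using A1c T3c four_block_carrier_mat[of A1 1 1 T3 m m] by simp
  have utT: "upper_triangular T" unfolding T_def
    by (rule upper_triangular_four_block[OF A1c T3c _ ut3]) (use A1c in \<open>auto simp: upper_triangular_def\<close>)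
  have BTB: "BD * T * BDa = A'"
  proof -
    have "BD * T = four_block_mat A1 (A2 * U3) (0\<^sub>m m 1) (U3 * T3)"
      unfolding BD_def T_def
      by (subst mult_four_block_mat[of _ 1 1 _ m _ m _ _ 1 _ m _ _]) (use U3c A1c A2c T3c in auto)
    also have "\<dots> * BDa = four_block_mat A1 (A2 * U3 * mat_adjoint U3) (0\<^sub>m m 1) (U3 * T3 * mat_adjoint U3)"
      unfolding BDa_def
      by (subst mult_four_block_mat[of _ 1 1 _ m _ m _ _ 1 _ m _ _]) (use U3c A1c A2c T3c in auto)
    also have "A2 * U3 * mat_adjoint U3 = A2"
      using A2c U3c U3U3' by (simp add: assoc_mult_mat[of _ 1 m _ m _ m])
    finally show ?thesis using A3e A0z blk(5) by simp
  qed
  define U where "U = W * BD"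
  have Uc: "U \<in> carrier_mat ?n ?n" unfolding U_def using Wc BDc by simp
  have Uadj: "mat_adjoint U = BDa * mat_adjoint W" unfolding U_def
    using adj_mult[OF Wc BDc] BDadj by simp
  have UU: "mat_adjoint U * U = 1\<^sub>m ?n"
  proof -
    have "mat_adjoint U * U = BDa * mat_adjoint W * (W * BD)" unfolding Uadj by (simp add: U_def)
    also have "\<dots> = BDa * (mat_adjoint W * W) * BD"
      using Wc BDc BDac by (simp add: assoc_mult_mat[of _ ?n ?n _ ?n _ ?n])
    finally have "mat_adjoint U * U = BDa * (mat_adjoint W * W) * BD" .
    then show ?thesis using WW BDBD BDac by simp
  qed
  have UU': "U * mat_adjoint U = 1\<^sub>m ?n"
  proof -
    have "U * mat_adjoint U = W * BD * (BDa * mat_adjoint W)" unfolding Uadj by (simp add: U_def)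
    also have "\<dots> = W * (BD * BDa) * mat_adjoint W"
      using Wc BDc BDac by (simp add: assoc_mult_mat[of _ ?n ?n _ ?n _ ?n])
    finally have "U * mat_adjoint U = W * (BD * BDa) * mat_adjoint W" .
    then show ?thesis using WW' BDBD' Wc by simp
  qed
  have "U * T * mat_adjoint U = W * BD * T * (BDa * mat_adjoint W)" unfolding Uadj by (simp add: U_def)
  also have "\<dots> = W * (BD * T * BDa) * mat_adjoint W"
    using Wc BDc BDac Tc by (simp add: assoc_mult_mat[of _ ?n ?n _ ?n _ ?n])
  also have "\<dots> = (W * mat_adjoint W) * A * (W * mat_adjoint W)"
    unfolding BTB A'_def using Wc A by (simp add: assoc_mult_mat[of _ ?n ?n _ ?n _ ?n])
  also have "\<dots> = A" using WW' A by simp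
  finally show ?case using Uc Tc UU UU' utT by metis
qed

definition diagm :: "nat \<Rightarrow> (nat \<Rightarrow> real) \<Rightarrow> cmat" where
  "diagm n d = mat n n (\<lambda>(i,j). if i = j then complex_of_real (d i) else 0)"

lemma diagm_carrier[simp]: "diagm n d \<in> carrier_mat n n" unfolding diagm_def by simp
lemma diagm_dims[simp]: "dim_row (diagm n d) = n" "dim_col (diagm n d) = n" unfolding diagm_def by auto

lemma diagm_adj[simp]: "mat_adjoint (diagm n d) = diagm n d"
  by (rule eq_matI) (auto simp: diagm_def)

lemma mult_diagm_right: assumes "Y \<in> carrier_mat r n" "i < r" "j < n"
  shows "(Y * diagm n d) $$ (i,j) = Y $$ (i,j) * complex_of_real (d j)"
proof -
  have "(Y * diagm n d) $$ (i,j) = (\<Sum>k<n. Y $$ (i,k) * diagm n d $$ (k,j))"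
    by (rule mult_index_sum'[OF assms(1) diagm_carrier assms(2,3)])
  also have "\<dots> = (\<Sum>k<n. if k = j then Y $$ (i,j) * complex_of_real (d j) else 0)"
    using assms by (intro sum.cong refl) (auto simp: diagm_def)
  finally show ?thesis using assms by simp
qed

lemma mult_diagm_left: assumes "Y \<in> carrier_mat n c" "i < n" "j < c"
  shows "(diagm n d * Y) $$ (i,j) = complex_of_real (d i) * Y $$ (i,j)"
proof -
  have "(diagm n d * Y) $$ (i,j) = (\<Sum>k<n. diagm n d $$ (i,k) * Y $$ (k,j))"
    by (rule mult_index_sum'[OF diagm_carrier assms(1) assms(2,3)])
  also have "\<dots> = (\<Sum>k<n. if k = i then complex_of_real (d i) * Y $$ (i,j) else 0)"
    using assms by (intro sum.cong refl) (auto simp: diagm_def)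
  finally show ?thesis using assms by simp
qed

lemma diagm_mult: "diagm n d * diagm n e = diagm n (\<lambda>i. d i * e i)"
proof (rule eq_matI)
  fix i j assume ij: "i < dim_row (diagm n (\<lambda>i. d i * e i))" "j < dim_col (diagm n (\<lambda>i. d i * e i))"
  then show "(diagm n d * diagm n e) $$ (i, j) = diagm n (\<lambda>i. d i * e i) $$ (i, j)"
    using mult_diagm_right[OF diagm_carrier, of i n j d e] by (auto simp: diagm_def)
qed auto

lemma hermitian_decomp:
  assumes A: "(A::cmat) \<in> carrier_mat n n" and h: "mat_adjoint A = A"
  shows "\<exists>U d. U \<in> carrier_mat n n \<and> mat_adjoint U * U = 1\<^sub>m n \<and> U * mat_adjoint U = 1\<^sub>m n \<and>
     A = U * diagm n d * mat_adjoint U"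
proof -
  from unitary_schur[OF A] obtain U T where Uc: "U \<in> carrier_mat n n" and Tc: "T \<in> carrier_mat n n"
    and UU: "mat_adjoint U * U = 1\<^sub>m n" and UU': "U * mat_adjoint U = 1\<^sub>m n"
    and ut: "upper_triangular T" and AT: "A = U * T * mat_adjoint U" by blast
  have TA: "T = mat_adjoint U * A * U"
  proof -
    have "mat_adjoint U * A * U = (mat_adjoint U * U) * T * (mat_adjoint U * U)"
      unfolding AT using Uc Tc by (simp add: assoc_mult_mat[of _ n n _ n _ n])
    then show ?thesis using UU Tc by simp
  qed
  have Th: "mat_adjoint T = T"
  proof -
    have "mat_adjoint T = mat_adjoint U * mat_adjoint (mat_adjoint U * A)"
      unfolding TA by (rule adj_mult[of _ n n]) (use Uc A in auto)
    also have "mat_adjoint (mat_adjoint U * A) = mat_adjoint A * U"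
      by (subst adj_mult[of _ n n]) (use Uc A in auto)
    finally have "mat_adjoint T = mat_adjoint U * (mat_adjoint A * U)" .
    then show ?thesis using h TA Uc A by (simp add: assoc_mult_mat[of _ n n _ n _ n])
  qed
  define d where "d i = Re (T $$ (i,i))" for i
  have "T = diagm n d"
  proof (rule eq_matI)
    fix i j assume "i < dim_row (diagm n d)" "j < dim_col (diagm n d)"
    then have ij: "i < n" "j < n" by (auto simp: diagm_def)
    have sym: "T $$ (i,j) = cnj (T $$ (j,i))"
      using arg_cong[OF Th, of "\<lambda>M. M $$ (i,j)"] ij Tc by auto
    show "T $$ (i,j) = diagm n d $$ (i,j)"
    proof (cases i j rule: linorder_cases)
      case less
      then have "T $$ (j,i) = 0" using ut ij Tc by (auto simp: upper_triangular_def)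
      then show ?thesis using sym less ij by (auto simp: diagm_def)
    next
      case equal
      then have "T $$ (i,i) = cnj (T $$ (i,i))" using sym by simp
      then have "Im (T $$ (i,i)) = 0" by (metis cnj.simps(2) neg_equal_zero)
      then have "T $$ (i,i) = complex_of_real (d i)" unfolding d_def by (simp add: complex_eq_iff)
      then show ?thesis using equal ij by (auto simp: diagm_def)
    next
      case greater
      then have "T $$ (i,j) = 0" using ut ij Tc by (auto simp: upper_triangular_def)
      then show ?thesis using greater ij by (auto simp: diagm_def)
    qed
  qed (use Tc in \<open>auto simp: diagm_def\<close>)
  then show ?thesis using Uc UU UU' AT by blast
qed

lemma diag_fun_commute:
  assumes Uc: "U \<in> carrier_mat n n" and UU: "mat_adjoint U * U = 1\<^sub>m n" and UU': "U * mat_adjoint U = 1\<^sub>m n"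
    and Yc: "Y \<in> carrier_mat n n" and comm: "Y * (U * diagm n d * mat_adjoint U) = (U * diagm n d * mat_adjoint U) * Y"
  shows "Y * (U * diagm n (\<lambda>i. f (d i)) * mat_adjoint U) = (U * diagm n (\<lambda>i. f (d i)) * mat_adjoint U) * Y"
proof -
  define Y' where "Y' = mat_adjoint U * Y * U"
  have Y'c: "Y' \<in> carrier_mat n n" unfolding Y'_def using Uc Yc by simp
  have YY: "Y = U * Y' * mat_adjoint U"
  proof -
    have "U * Y' * mat_adjoint U = (U * mat_adjoint U) * Y * (U * mat_adjoint U)"
      unfolding Y'_def using Uc Yc by (simp add: assoc_mult_mat[of _ n n _ n _ n])
    then show ?thesis using UU' Yc by simp
  qed
  have c1: "Y' * diagm n d = diagm n d * Y'"
  proof -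
    have "Y' * diagm n d = mat_adjoint U * (Y * (U * diagm n d * mat_adjoint U)) * U"
    proof -
      have "mat_adjoint U * (Y * (U * diagm n d * mat_adjoint U)) * U = mat_adjoint U * Y * U * diagm n d * (mat_adjoint U * U)"
        using Uc Yc by (simp add: assoc_mult_mat[of _ n n _ n _ n])
      then show ?thesis unfolding Y'_def UU using Uc Yc by simp
    qed
    also have "\<dots> = mat_adjoint U * ((U * diagm n d * mat_adjoint U) * Y) * U" using comm by simp
    also have "\<dots> = (mat_adjoint U * U) * diagm n d * (mat_adjoint U * Y * U)"
      using Uc Yc by (simp add: assoc_mult_mat[of _ n n _ n _ n])
    also have "\<dots> = diagm n d * Y'" unfolding UU Y'_def by simp
    finally show ?thesis .
  qed
  have c2: "Y' * diagm n (\<lambda>i. f (d i)) = diagm n (\<lambda>i. f (d i)) * Y'"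
  proof (rule eq_matI)
    fix i j assume "i < dim_row (diagm n (\<lambda>i. f (d i)) * Y')" "j < dim_col (diagm n (\<lambda>i. f (d i)) * Y')"
    then have ij: "i < n" "j < n" using Y'c by (auto simp: diagm_def)
    have "Y' $$ (i,j) * complex_of_real (d j) = complex_of_real (d i) * Y' $$ (i,j)"
      using arg_cong[OF c1, of "\<lambda>M. M $$ (i,j)"] Y'c ij by (simp add: mult_diagm_right mult_diagm_left del: index_mult_mat(1))
    then have "Y' $$ (i,j) = 0 \<or> d i = d j" by (auto simp: mult.commute)
    then show "(Y' * diagm n (\<lambda>i. f (d i))) $$ (i,j) = (diagm n (\<lambda>i. f (d i)) * Y') $$ (i,j)"
      using Y'c ij by (auto simp: mult_diagm_right mult_diagm_left mult.commute simp del: index_mult_mat(1))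
  qed (use Y'c in \<open>auto simp: diagm_def\<close>)
  let ?F = "diagm n (\<lambda>i. f (d i))"
  have "Y * (U * ?F * mat_adjoint U) = U * (Y' * ?F) * mat_adjoint U"
  proof -
    have "U * (Y' * ?F) * mat_adjoint U = U * Y' * ?F * (mat_adjoint U)" using Uc Y'c by (simp add: assoc_mult_mat[of _ n n _ n _ n])
    moreover have "Y * (U * ?F * mat_adjoint U) = U * Y' * (mat_adjoint U * U) * ?F * mat_adjoint U"
      unfolding YY using Uc Y'c by (simp add: assoc_mult_mat[of _ n n _ n _ n])
    ultimately show ?thesis unfolding UU using Uc Y'c by (simp add: assoc_mult_mat[of _ n n _ n _ n])
  qed
  also have "\<dots> = U * (?F * Y') * mat_adjoint U" unfolding c2 ..
  also have "\<dots> = (U * ?F * mat_adjoint U) * Y"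
  proof -
    have "(U * ?F * mat_adjoint U) * Y = U * ?F * (mat_adjoint U * U) * Y' * mat_adjoint U"
      unfolding YY using Uc Y'c by (simp add: assoc_mult_mat[of _ n n _ n _ n])
    then show ?thesis unfolding UU using Uc Y'c by (simp add: assoc_mult_mat[of _ n n _ n _ n])
  qed
  finally show ?thesis .
qed

lemma sum_split_add: "(\<Sum>k<a+b. f k) = (\<Sum>k<a. f k) + (\<Sum>i<b. f (a+i))" for a b :: nat
  by (induct b) (auto simp: add.assoc)

lemma sum_blocks: "(\<Sum>p<m*n. f p) = (\<Sum>a<m. \<Sum>i<n. f (a*n+i))" for m n :: nat
proof (induct m)
  case 0 then show ?case by simp
next
  case (Suc m)
  have "(\<Sum>p<Suc m * n. f p) = (\<Sum>p<m*n + n. f p)" by (simp add: add.commute)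
  also have "\<dots> = (\<Sum>p<m*n. f p) + (\<Sum>i<n. f (m*n+i))" by (rule sum_split_add)
  finally show ?case using Suc by simp
qed

lemma divmod_block[simp]: "i < n \<Longrightarrow> (a*n+i) div n = a" "i < n \<Longrightarrow> (a*n+i) mod n = i" for a i n :: nat
  by auto

lemma block_lt: "a < m \<Longrightarrow> i < n \<Longrightarrow> a*n+i < m*n" for a i m n :: nat
proof -
  assume "a < m" "i < n"
  then have "a*n+i < a*n+n" by simp
  also have "\<dots> = (a+1)*n" by simp
  also have "\<dots> \<le> m*n" using \<open>a < m\<close> by (intro mult_right_mono) auto
  finally show ?thesis .
qed

lemma block_div_lt: "p < m*n \<Longrightarrow> p div n < m" for p m n :: nat
  by (simp add: less_mult_imp_div_less)

lemma block_mod_lt: "p < m*n \<Longrightarrow> p mod n < n" for p m n :: nat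
  by (cases "n = 0") auto

lemma block_decomp: "p = (p div n) * n + p mod n" for p n :: nat by simp

text \<open>identity tensor X: block diagonal matrix\<close>
definition idt :: "nat \<Rightarrow> nat \<Rightarrow> cmat \<Rightarrow> cmat" where
  "idt k n X = mat (k*n) (k*n) (\<lambda>(p,q). if p div n = q div n then X $$ (p mod n, q mod n) else 0)"

lemma idt_carrier[simp]: "idt k n X \<in> carrier_mat (k*n) (k*n)" unfolding idt_def by simp
lemma idt_dims[simp]: "dim_row (idt k n X) = k*n" "dim_col (idt k n X) = k*n" unfolding idt_def by auto

lemma idt_index: "p < k*n \<Longrightarrow> q < k*n \<Longrightarrow> idt k n X $$ (p,q) = (if p div n = q div n then X $$ (p mod n, q mod n) else 0)"
  unfolding idt_def by simp

lemma idt_one: "idt k n (1\<^sub>m n) = 1\<^sub>m (k*n)"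
proof (rule eq_matI)
  fix p q assume pq: "p < dim_row (1\<^sub>m (k*n) :: cmat)" "q < dim_col (1\<^sub>m (k*n) :: cmat)"
  then have "p mod n < n" "q mod n < n" by (auto simp: block_mod_lt)
  moreover have "p = q \<longleftrightarrow> p div n = q div n \<and> p mod n = q mod n" by (metis block_decomp)
  ultimately show "idt k n (1\<^sub>m n) $$ (p, q) = 1\<^sub>m (k * n) $$ (p, q)" using pq by (auto simp: idt_index)
qed auto

lemma idt_mult_index:
  assumes W: "W \<in> carrier_mat (k*n) c" and X: "X \<in> carrier_mat n n" and p: "p < k*n" and q: "q < c"
  shows "(idt k n X * W) $$ (p,q) = (\<Sum>l<n. X $$ (p mod n, l) * W $$ ((p div n)*n + l, q))"
proof -
  have a: "p div n < k" using p by (rule block_div_lt)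
  have "(idt k n X * W) $$ (p,q) = (\<Sum>p'<k*n. idt k n X $$ (p,p') * W $$ (p',q))"
    by (rule mult_index_sum'[OF idt_carrier W p q])
  also have "\<dots> = (\<Sum>b<k. \<Sum>l<n. idt k n X $$ (p,b*n+l) * W $$ (b*n+l,q))" by (rule sum_blocks)
  also have "\<dots> = (\<Sum>b<k. if b = p div n then (\<Sum>l<n. X $$ (p mod n, l) * W $$ ((p div n)*n + l, q)) else 0)"
    by (intro sum.cong refl) (auto simp: idt_index p block_lt)
  also have "\<dots> = (\<Sum>l<n. X $$ (p mod n, l) * W $$ ((p div n)*n + l, q))"
    using a by simp
  finally show ?thesis .
qed

lemma mult_idt_index:
  assumes W: "W \<in> carrier_mat r (k*n)" and X: "X \<in> carrier_mat n n" and p: "p < r" and q: "q < k*n"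
  shows "(W * idt k n X) $$ (p,q) = (\<Sum>l<n. W $$ (p, (q div n)*n + l) * X $$ (l, q mod n))"
proof -
  have a: "q div n < k" using q by (rule block_div_lt)
  have "(W * idt k n X) $$ (p,q) = (\<Sum>p'<k*n. W $$ (p,p') * idt k n X $$ (p',q))"
    by (rule mult_index_sum'[OF W idt_carrier p q])
  also have "\<dots> = (\<Sum>b<k. \<Sum>l<n. W $$ (p,b*n+l) * idt k n X $$ (b*n+l,q))" by (rule sum_blocks)
  also have "\<dots> = (\<Sum>b<k. if b = q div n then (\<Sum>l<n. W $$ (p, (q div n)*n + l) * X $$ (l, q mod n)) else 0)"
    by (intro sum.cong refl) (auto simp: idt_index q block_lt)
  also have "\<dots> = (\<Sum>l<n. W $$ (p, (q div n)*n + l) * X $$ (l, q mod n))"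
    using a by simp
  finally show ?thesis .
qed

lemma vec_adj:
  assumes L: "(L::cmat) \<in> carrier_mat r c" and v: "v \<in> carrier_vec r" and w: "w \<in> carrier_vec c"
  shows "conjugate v \<bullet> (L *\<^sub>v w) = conjugate (mat_adjoint L *\<^sub>v v) \<bullet> w"
proof -
  have "conjugate v \<bullet> (L *\<^sub>v w) = (\<Sum>i<r. cnj (v $ i) * (\<Sum>j<c. L $$ (i,j) * w $ j))"
    using L v w by (simp add: scalar_prod_def atLeast0LessThan conjugate_complex_def)
  also have "\<dots> = (\<Sum>i<r. \<Sum>j<c. cnj (v $ i) * L $$ (i,j) * w $ j)"
    by (simp add: sum_distrib_left mult.assoc)
  also have "\<dots> = (\<Sum>j<c. \<Sum>i<r. cnj (v $ i) * L $$ (i,j) * w $ j)" by (rule sum.swap)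
  also have "\<dots> = (\<Sum>j<c. (\<Sum>i<r. cnj (v $ i) * L $$ (i,j)) * w $ j)"
    by (simp add: sum_distrib_right)
  also have "\<dots> = (\<Sum>j<c. cnj (\<Sum>i<r. cnj (L $$ (i,j)) * v $ i) * w $ j)"
    by (simp add: mult.commute)
  also have "\<dots> = conjugate (mat_adjoint L *\<^sub>v v) \<bullet> w"
    using L v w by (simp add: scalar_prod_def atLeast0LessThan conjugate_complex_def)
  finally show ?thesis .
qed

lemma psd_congr:
  assumes M: "psd c M" and L: "L \<in> carrier_mat r c"
  shows "psd r (L * M * mat_adjoint L)"
proof -
  have Mc: "M \<in> carrier_mat c c" and Mh: "mat_adjoint M = M"
    and Mp: "\<forall>v\<in>carrier_vec c. 0 \<le> Re (conjugate v \<bullet> (M *\<^sub>v v))" using M unfolding psd_def by auto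
  have LM: "L * M \<in> carrier_mat r c" by (rule mult_carrier_mat[OF L Mc])
  have c: "L * M * mat_adjoint L \<in> carrier_mat r r" by (rule mult_carrier_mat[OF LM adj_carrier[OF L]])
  have h: "mat_adjoint (L * M * mat_adjoint L) = L * M * mat_adjoint L"
  proof -
    have "mat_adjoint (L * M * mat_adjoint L) = mat_adjoint (mat_adjoint L) * mat_adjoint (L * M)"
      by (rule adj_mult[of _ r c]) (use L Mc in auto)
    also have "mat_adjoint (L * M) = mat_adjoint M * mat_adjoint L" by (rule adj_mult[OF L Mc])
    finally show ?thesis using L Mc Mh by (simp add: assoc_mult_mat[of _ r c _ c _ r])
  qed
  have p: "0 \<le> Re (conjugate v \<bullet> ((L * M * mat_adjoint L) *\<^sub>v v))" if v: "v \<in> carrier_vec r" for v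
  proof -
    let ?w = "mat_adjoint L *\<^sub>v v"
    have w: "?w \<in> carrier_vec c" by (rule mult_mat_vec_carrier[OF adj_carrier[OF L] v])
    have "(L * M * mat_adjoint L) *\<^sub>v v = (L * M) *\<^sub>v ?w"
      by (rule assoc_mult_mat_vec[OF LM adj_carrier[OF L] v])
    also have "\<dots> = L *\<^sub>v (M *\<^sub>v ?w)"
      by (rule assoc_mult_mat_vec[OF L Mc w])
    finally have "(L * M * mat_adjoint L) *\<^sub>v v = L *\<^sub>v (M *\<^sub>v ?w)" .
    then have "conjugate v \<bullet> ((L * M * mat_adjoint L) *\<^sub>v v) = conjugate ?w \<bullet> (M *\<^sub>v ?w)"
      using vec_adj[OF L v, of "M *\<^sub>v ?w"] Mc w by simp
    then show ?thesis using Mp w by simp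
  qed
  show ?thesis unfolding psd_def using c h p by auto
qed

lemma psd_add: assumes "psd n A" "psd n B" shows "psd n (A + B)"
proof -
  have Ac: "A \<in> carrier_mat n n" and Bc: "B \<in> carrier_mat n n" using assms unfolding psd_def by auto
  have h: "mat_adjoint (A + B) = A + B" using assms adj_add[OF Ac Bc] unfolding psd_def by simp
  have p: "0 \<le> Re (conjugate v \<bullet> ((A + B) *\<^sub>v v))" if v: "v \<in> carrier_vec n" for v
  proof -
    have "conjugate v \<bullet> ((A + B) *\<^sub>v v) = conjugate v \<bullet> (A *\<^sub>v v) + conjugate v \<bullet> (B *\<^sub>v v)"
      using Ac Bc v by (simp add: add_mult_distrib_mat_vec[of _ n n] scalar_prod_add_distrib[of _ n])
    then show ?thesis using assms v unfolding psd_def by simp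
  qed
  show ?thesis unfolding psd_def using Ac Bc h p by auto
qed

lemma psd_zero: "psd n (0\<^sub>m n n)"
  unfolding psd_def by (auto simp: scalar_prod_def)

lemma psd_msum: assumes "\<forall>x\<in>set xs. psd n (f x)" shows "psd n (msum n (map f xs))"
  using assms by (induct xs) (auto simp: psd_zero psd_add)

lemma adj_idt: assumes "X \<in> carrier_mat n n" shows "mat_adjoint (idt k n X) = idt k n (mat_adjoint X)"
proof (rule eq_matI)
  fix p q assume pq: "p < dim_row (idt k n (mat_adjoint X))" "q < dim_col (idt k n (mat_adjoint X))"
  then have "p mod n < n" "q mod n < n" by (auto simp: block_mod_lt)
  then show "mat_adjoint (idt k n X) $$ (p, q) = idt k n (mat_adjoint X) $$ (p, q)"
    using pq assms by (auto simp: idt_index)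
qed auto

lemma ampl_kraus:
  assumes kc: "\<forall>K\<in>set Ks. K \<in> carrier_mat n n" and M: "M \<in> carrier_mat (k*n) (k*n)"
  shows "ampl k n (kraus_map n Ks) M = msum (k*n) (map (\<lambda>K. idt k n K * M * mat_adjoint (idt k n K)) Ks)"
proof (rule eq_matI)
  have c: "\<forall>K\<in>set Ks. idt k n K * M * mat_adjoint (idt k n K) \<in> carrier_mat (k*n) (k*n)"
    using M by auto
  have cc: "msum (k*n) (map (\<lambda>K. idt k n K * M * mat_adjoint (idt k n K)) Ks) \<in> carrier_mat (k*n) (k*n)"
    using c by simp
  show "dim_row (ampl k n (kraus_map n Ks) M) = dim_row (msum (k*n) (map (\<lambda>K. idt k n K * M * mat_adjoint (idt k n K)) Ks))"
    "dim_col (ampl k n (kraus_map n Ks) M) = dim_col (msum (k*n) (map (\<lambda>K. idt k n K * M * mat_adjoint (idt k n K)) Ks))"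
    using cc by (auto simp: ampl_def)
  fix p q assume "p < dim_row (msum (k*n) (map (\<lambda>K. idt k n K * M * mat_adjoint (idt k n K)) Ks))"
    "q < dim_col (msum (k*n) (map (\<lambda>K. idt k n K * M * mat_adjoint (idt k n K)) Ks))"
  then have p: "p < k*n" and q: "q < k*n" using cc by auto
  have pm: "p mod n < n" and qm: "q mod n < n" using p q by (auto simp: block_mod_lt)
  define blk where "blk = mat n n (\<lambda>(r, s). M $$ (p div n * n + r, q div n * n + s))"
  have blkc: "blk \<in> carrier_mat n n" unfolding blk_def by simp
  have lhs: "ampl k n (kraus_map n Ks) M $$ (p,q) = kraus_map n Ks blk $$ (p mod n, q mod n)"
    using p q unfolding ampl_def blk_def by simp
  have e: "(K * blk * mat_adjoint K) $$ (p mod n, q mod n) = (idt k n K * M * mat_adjoint (idt k n K)) $$ (p,q)"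
    if K: "K \<in> carrier_mat n n" for K
  proof -
    have "(K * blk * mat_adjoint K) $$ (p mod n, q mod n) = (\<Sum>l<n. (K * blk) $$ (p mod n, l) * mat_adjoint K $$ (l, q mod n))"
      by (rule mult_index_sum'[of _ n n _ n]) (use K blkc pm qm in auto)
    also have "\<dots> = (\<Sum>l<n. (\<Sum>i<n. K $$ (p mod n, i) * M $$ (p div n * n + i, q div n * n + l)) * cnj (K $$ (q mod n, l)))"
    proof (intro sum.cong refl)
      fix l assume l: "l \<in> {..<n}"
      have "(K * blk) $$ (p mod n, l) = (\<Sum>i<n. K $$ (p mod n, i) * blk $$ (i, l))"
        by (rule mult_index_sum'[of _ n n _ n]) (use K blkc pm l in auto)
      then show "(K * blk) $$ (p mod n, l) * mat_adjoint K $$ (l, q mod n) =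
         (\<Sum>i<n. K $$ (p mod n, i) * M $$ (p div n * n + i, q div n * n + l)) * cnj (K $$ (q mod n, l))"
        using l K qm by (simp add: blk_def)
    qed
    also have "\<dots> = (\<Sum>l<n. (idt k n K * M) $$ (p, q div n * n + l) * mat_adjoint K $$ (l, q mod n))"
    proof (intro sum.cong refl)
      fix l assume l: "l \<in> {..<n}"
      have "q div n * n + l < k * n" using block_lt[OF block_div_lt[OF q], of l n] l by auto
      then show "(\<Sum>i<n. K $$ (p mod n, i) * M $$ (p div n * n + i, q div n * n + l)) * cnj (K $$ (q mod n, l)) =
        (idt k n K * M) $$ (p, q div n * n + l) * mat_adjoint K $$ (l, q mod n)"
        using idt_mult_index[OF M K p] l K qm by simp
    qed
    also have "\<dots> = (idt k n K * M * idt k n (mat_adjoint K)) $$ (p,q)"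
      by (rule mult_idt_index[symmetric]) (use M K p q in auto)
    finally show ?thesis using adj_idt[OF K] by simp
  qed
  have "kraus_map n Ks blk $$ (p mod n, q mod n) = (\<Sum>K\<leftarrow>Ks. (K * blk * mat_adjoint K) $$ (p mod n, q mod n))"
    unfolding kraus_map_def by (rule msum_map_index) (use kc blkc pm qm in auto)
  also have "\<dots> = (\<Sum>K\<leftarrow>Ks. (idt k n K * M * mat_adjoint (idt k n K)) $$ (p,q))"
    using e kc by (intro arg_cong[where f=sum_list] map_cong) auto
  also have "\<dots> = msum (k*n) (map (\<lambda>K. idt k n K * M * mat_adjoint (idt k n K)) Ks) $$ (p,q)"
    by (rule msum_map_index[symmetric]) (use c p q in auto)
  finally show "ampl k n (kraus_map n Ks) M $$ (p,q) = msum (k*n) (map (\<lambda>K. idt k n K * M * mat_adjoint (idt k n K)) Ks) $$ (p,q)"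
    using lhs by simp
qed

lemma kraus_cp: assumes kc: "\<forall>K\<in>set Ks. K \<in> carrier_mat n n" shows "completely_positive n (kraus_map n Ks)"
  unfolding completely_positive_def
proof (intro allI impI)
  fix k M assume M: "psd (k*n) M"
  then have Mc: "M \<in> carrier_mat (k*n) (k*n)" unfolding psd_def by auto
  show "psd (k*n) (ampl k n (kraus_map n Ks) M)"
    unfolding ampl_kraus[OF kc Mc]
    by (rule psd_msum) (auto intro: psd_congr[OF M])
qed

lemma kraus_linear: assumes kc: "\<forall>K\<in>set Ks. K \<in> carrier_mat n n" shows "linear_map_mat n (kraus_map n Ks)"
  unfolding linear_map_mat_def
proof (intro conjI ballI allI)
  fix A :: cmat assume A: "A \<in> carrier_mat n n"
  show "kraus_map n Ks A \<in> carrier_mat n n" using kc A by simp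
  fix c show "kraus_map n Ks (c \<cdot>\<^sub>m A) = c \<cdot>\<^sub>m kraus_map n Ks A"
  proof -
    have "kraus_map n Ks (c \<cdot>\<^sub>m A) = msum n (map (\<lambda>K. c \<cdot>\<^sub>m (K * A * mat_adjoint K)) Ks)"
      unfolding kraus_map_def
      by (rule msum_cong) (use kc A in \<open>auto simp: mult_smult_distrib[of _ n n _ n] mult_smult_assoc_mat[of _ n n _ n]\<close>)
    also have "\<dots> = c \<cdot>\<^sub>m kraus_map n Ks A"
      unfolding kraus_map_def by (rule msum_smult) (use kc A in auto)
    finally show ?thesis .
  qed
next
  fix A B :: cmat assume A: "A \<in> carrier_mat n n" and B: "B \<in> carrier_mat n n"
  have "kraus_map n Ks (A + B) = msum n (map (\<lambda>K. K * A * mat_adjoint K + K * B * mat_adjoint K) Ks)"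
    unfolding kraus_map_def
    by (rule msum_cong) (use kc A B in \<open>auto simp: mult_add_distrib_mat[of _ n n] add_mult_distrib_mat[of _ n n _ _ n]\<close>)
  also have "\<dots> = kraus_map n Ks A + kraus_map n Ks B"
    unfolding kraus_map_def by (rule msum_add) (use kc A B in auto)
  finally show "kraus_map n Ks (A + B) = kraus_map n Ks A + kraus_map n Ks B" .
qed

lemma kraus_tp: assumes kc: "\<forall>K\<in>set Ks. K \<in> carrier_mat n n" and u: "kd n Ks (1\<^sub>m n) = 1\<^sub>m n"
  shows "trace_preserving n (kraus_map n Ks)"
  unfolding trace_preserving_def
proof
  fix A :: cmat assume A: "A \<in> carrier_mat n n"
  have kA: "kraus_map n Ks A \<in> carrier_mat n n" using kc A by simp
  have "mtrace (kraus_map n Ks A) = mtrace (kraus_map n Ks A * 1\<^sub>m n)" by (simp add: right_mult_one_mat[OF kA])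
  also have "\<dots> = mtrace (A * kd n Ks (1\<^sub>m n))" by (rule kraus_trace_dual[OF kc A]) simp
  also have "\<dots> = mtrace A" using u A by simp
  finally show "mtrace (kraus_map n Ks A) = mtrace A" .
qed

lemma kraus_channel: assumes kc: "\<forall>K\<in>set Ks. K \<in> carrier_mat n n" and u: "kd n Ks (1\<^sub>m n) = 1\<^sub>m n"
  shows "channel n (kraus_map n Ks)"
  unfolding channel_def using kraus_linear[OF kc] kraus_cp[OF kc] kraus_tp[OF kc u] by auto

lemma row_adj: "k < dim_col (V::cmat) \<Longrightarrow> row (mat_adjoint V) k = conjugate (col V k)"
  by (rule eq_vecI) (auto simp: conjugate_complex_def)

lemma diag_unit: assumes k: "k < N" shows "diagm N d *\<^sub>v unit_vec N k = complex_of_real (d k) \<cdot>\<^sub>v unit_vec N k"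
proof (rule eq_vecI)
  fix i assume "i < dim_vec (complex_of_real (d k) \<cdot>\<^sub>v unit_vec N k)"
  then have i: "i < N" by simp
  have "(diagm N d *\<^sub>v unit_vec N k) $ i = row (diagm N d) i \<bullet> unit_vec N k" using i by simp
  also have "\<dots> = row (diagm N d) i $ k" using k by (intro scalar_prod_right_unit) auto
  also have "\<dots> = (complex_of_real (d k) \<cdot>\<^sub>v unit_vec N k) $ i" using i k by (auto simp: diagm_def unit_vec_def)
  finally show "(diagm N d *\<^sub>v unit_vec N k) $ i = (complex_of_real (d k) \<cdot>\<^sub>v unit_vec N k) $ i" .
qed simp

lemma psd_eig_nonneg:
  assumes C: "psd N C" and V: "V \<in> carrier_mat N N" and VV: "mat_adjoint V * V = 1\<^sub>m N"
    and Ce: "C = V * diagm N d * mat_adjoint V" and k: "k < N"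
  shows "d k \<ge> 0"
proof -
  let ?v = "col V k"
  have v: "?v \<in> carrier_vec N" using V by (simp add: carrier_vecI)
  have a: "mat_adjoint V *\<^sub>v ?v = unit_vec N k"
  proof -
    have "mat_adjoint V *\<^sub>v ?v = col (mat_adjoint V * V) k"
      by (rule col_mult2[symmetric]) (use V k in auto)
    then show ?thesis using VV k by simp
  qed
  have "C *\<^sub>v ?v = V *\<^sub>v (diagm N d *\<^sub>v (mat_adjoint V *\<^sub>v ?v))"
    unfolding Ce using V v by (simp add: assoc_mult_mat_vec[of _ N N _ N])
  also have "\<dots> = V *\<^sub>v (complex_of_real (d k) \<cdot>\<^sub>v unit_vec N k)" unfolding a diag_unit[OF k] ..
  also have "\<dots> = complex_of_real (d k) \<cdot>\<^sub>v (V *\<^sub>v unit_vec N k)"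
    by (rule mult_mat_vec[OF V]) simp
  also have "V *\<^sub>v unit_vec N k = ?v"
  proof -
    show ?thesis by (rule eq_vecI) (use V k in auto)
  qed
  finally have Cv: "C *\<^sub>v ?v = complex_of_real (d k) \<cdot>\<^sub>v ?v" .
  have n1: "conjugate ?v \<bullet> ?v = 1"
  proof -
    have "(mat_adjoint V * V) $$ (k,k) = row (mat_adjoint V) k \<bullet> col V k" using V k by simp
    then show ?thesis using VV k row_adj[of k V] V by simp
  qed
  have "conjugate ?v \<bullet> (C *\<^sub>v ?v) = complex_of_real (d k)"
    unfolding Cv using n1 v by (simp add: scalar_prod_smult_distrib[of _ N])
  then show ?thesis using C v unfolding psd_def by (metis Re_complex_of_real)
qed

lemma udu_index:
  assumes V: "V \<in> carrier_mat N N" and i: "i < N" and j: "j < N"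
  shows "(V * diagm N d * mat_adjoint V) $$ (i,j) = (\<Sum>k<N. V $$ (i,k) * complex_of_real (d k) * cnj (V $$ (j,k)))"
proof -
  have "(V * diagm N d * mat_adjoint V) $$ (i,j) = (\<Sum>k<N. (V * diagm N d) $$ (i,k) * mat_adjoint V $$ (k,j))"
    by (rule mult_index_sum'[of _ N N _ N]) (use V i j in auto)
  also have "\<dots> = (\<Sum>k<N. V $$ (i,k) * complex_of_real (d k) * cnj (V $$ (j,k)))"
  proof (intro sum.cong refl)
    fix k assume "k \<in> {..<N}"
    then have k: "k < N" by simp
    show "(V * diagm N d) $$ (i,k) * mat_adjoint V $$ (k,j) = V $$ (i,k) * complex_of_real (d k) * cnj (V $$ (j,k))"
      using mult_diagm_right[OF V i k, of d] V j k by simp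
  qed
  finally show ?thesis .
qed

lemma zero_smult_mat: "A \<in> carrier_mat n n \<Longrightarrow> 0 \<cdot>\<^sub>m (A::cmat) = 0\<^sub>m n n"
  by (rule eq_matI) auto

lemma linear_zero: assumes "linear_map_mat n \<Phi>" shows "\<Phi> (0\<^sub>m n n) = 0\<^sub>m n n"
proof -
  have "\<Phi> (0\<^sub>m n n) = \<Phi> (0 \<cdot>\<^sub>m 0\<^sub>m n n)" using zero_smult_mat[of "0\<^sub>m n n" n] by simp
  also have "\<dots> = 0 \<cdot>\<^sub>m \<Phi> (0\<^sub>m n n)" using assms unfolding linear_map_mat_def by (meson zero_carrier_mat)
  also have "\<dots> = 0\<^sub>m n n" using assms zero_smult_mat unfolding linear_map_mat_def by auto
  finally show ?thesis .
qed

lemma linear_msum: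
  assumes l: "linear_map_mat n \<Phi>" and xs: "\<forall>x\<in>set xs. x \<in> carrier_mat n n"
  shows "\<Phi> (msum n xs) = msum n (map \<Phi> xs)"
  using xs
proof (induct xs)
  case Nil then show ?case using linear_zero[OF l] by simp
next
  case (Cons x xs)
  have "msum n xs \<in> carrier_mat n n" using Cons by (intro msum_carrier) auto
  then show ?case using Cons l unfolding linear_map_mat_def by auto
qed

lemma sum_list_product: "(\<Sum>p\<leftarrow>List.product xs ys. f p) = (\<Sum>x\<leftarrow>xs. \<Sum>y\<leftarrow>ys. f (x,y))"
  by (induct xs) (auto simp: comp_def)

lemma mat_expand:
  assumes r: "\<rho> \<in> carrier_mat n n"
  shows "\<rho> = msum n (map (\<lambda>(a,b). \<rho> $$ (a,b) \<cdot>\<^sub>m unitm n a b) (List.product [0..<n] [0..<n]))"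
proof (rule eq_matI)
  have c: "\<forall>x\<in>set (List.product [0..<n] [0..<n]). (case x of (a,b) \<Rightarrow> \<rho> $$ (a,b) \<cdot>\<^sub>m unitm n a b) \<in> carrier_mat n n"
    by auto
  fix i j assume ij: "i < dim_row (msum n (map (\<lambda>(a,b). \<rho> $$ (a,b) \<cdot>\<^sub>m unitm n a b) (List.product [0..<n] [0..<n])))"
    "j < dim_col (msum n (map (\<lambda>(a,b). \<rho> $$ (a,b) \<cdot>\<^sub>m unitm n a b) (List.product [0..<n] [0..<n])))"
  then have ij: "i < n" "j < n" using msum_map_carrier'[OF c] by auto
  have "msum n (map (\<lambda>(a,b). \<rho> $$ (a,b) \<cdot>\<^sub>m unitm n a b) (List.product [0..<n] [0..<n])) $$ (i,j)
     = (\<Sum>p\<leftarrow>List.product [0..<n] [0..<n]. (case p of (a,b) \<Rightarrow> \<rho> $$ (a,b) \<cdot>\<^sub>m unitm n a b) $$ (i,j))"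
    by (rule msum_map_index) (use c ij in auto)
  also have "\<dots> = (\<Sum>a\<leftarrow>[0..<n]. \<Sum>b\<leftarrow>[0..<n]. (\<rho> $$ (a,b) \<cdot>\<^sub>m unitm n a b) $$ (i,j))"
    by (simp add: sum_list_product)
  also have "\<dots> = (\<Sum>a\<leftarrow>[0..<n]. \<Sum>b\<leftarrow>[0..<n]. if a = i \<and> b = j then \<rho> $$ (i,j) else 0)"
    using ij by (intro arg_cong[where f=sum_list] map_cong refl) (auto simp: unitm_def)
  also have "\<dots> = (\<Sum>a\<leftarrow>[0..<n]. if a = i then \<rho> $$ (i,j) else 0)"
  proof (intro arg_cong[where f=sum_list] map_cong refl)
    fix a assume "a \<in> set [0..<n]"
    have "(\<Sum>b\<leftarrow>[0..<n]. if a = i \<and> b = j then \<rho> $$ (i,j) else 0) = (\<Sum>b\<in>{0..<n}. if a = i \<and> b = j then \<rho> $$ (i,j) else 0)"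
      by (simp add: sum_set_upt_conv_sum_list_nat[symmetric])
    also have "\<dots> = (if a = i then \<rho> $$ (i,j) else 0)" using ij by (cases "a = i") auto
    finally show "(\<Sum>b\<leftarrow>[0..<n]. if a = i \<and> b = j then \<rho> $$ (i,j) else 0) = (if a = i then \<rho> $$ (i,j) else 0)" .
  qed
  also have "\<dots> = \<rho> $$ (i,j)"
    using ij by (simp add: sum_set_upt_conv_sum_list_nat[symmetric])
  finally show "\<rho> $$ (i,j) = msum n (map (\<lambda>(a,b). \<rho> $$ (a,b) \<cdot>\<^sub>m unitm n a b) (List.product [0..<n] [0..<n])) $$ (i,j)"
    by simp
next
  have c: "\<forall>x\<in>set (List.product [0..<n] [0..<n]). (case x of (a,b) \<Rightarrow> \<rho> $$ (a,b) \<cdot>\<^sub>m unitm n a b) \<in> carrier_mat n n"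
    by auto
  note mc = msum_map_carrier'[OF c]
  show "dim_row \<rho> = dim_row (msum n (map (\<lambda>(a,b). \<rho> $$ (a,b) \<cdot>\<^sub>m unitm n a b) (List.product [0..<n] [0..<n])))"
    "dim_col \<rho> = dim_col (msum n (map (\<lambda>(a,b). \<rho> $$ (a,b) \<cdot>\<^sub>m unitm n a b) (List.product [0..<n] [0..<n])))"
    using carrier_matD[OF mc] r by auto
qed

lemma linear_ext:
  assumes l1: "linear_map_mat n \<Phi>" and l2: "linear_map_mat n \<Psi>"
    and e: "\<forall>a<n. \<forall>b<n. \<Phi> (unitm n a b) = \<Psi> (unitm n a b)"
  shows "\<forall>\<rho>\<in>carrier_mat n n. \<Phi> \<rho> = \<Psi> \<rho>"
proof
  fix \<rho> :: cmat assume r: "\<rho> \<in> carrier_mat n n"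
  let ?xs = "map (\<lambda>(a,b). \<rho> $$ (a,b) \<cdot>\<^sub>m unitm n a b) (List.product [0..<n] [0..<n])"
  have c: "\<forall>x\<in>set ?xs. x \<in> carrier_mat n n" by auto
  have "\<Phi> \<rho> = msum n (map \<Phi> ?xs)" using linear_msum[OF l1 c] mat_expand[OF r] by simp
  also have "map \<Phi> ?xs = map \<Psi> ?xs"
  proof (rule map_cong[OF refl])
    fix x assume "x \<in> set ?xs"
    then obtain a b where ab: "a < n" "b < n" and x: "x = \<rho> $$ (a,b) \<cdot>\<^sub>m unitm n a b" by auto
    have "\<Phi> x = \<rho> $$ (a,b) \<cdot>\<^sub>m \<Phi> (unitm n a b)" unfolding x using l1 unfolding linear_map_mat_def by auto
    also have "\<dots> = \<rho> $$ (a,b) \<cdot>\<^sub>m \<Psi> (unitm n a b)" using e ab by simp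
    also have "\<dots> = \<Psi> x" unfolding x using l2 unfolding linear_map_mat_def by auto
    finally show "\<Phi> x = \<Psi> x" .
  qed
  also have "msum n (map \<Psi> ?xs) = \<Psi> \<rho>" using linear_msum[OF l2 c] mat_expand[OF r] by simp
  finally show "\<Phi> \<rho> = \<Psi> \<rho>" .
qed

definition omega :: "nat \<Rightarrow> cmat" where
  "omega n = mat (n*n) (n*n) (\<lambda>(p,q). if p div n = p mod n \<and> q div n = q mod n then 1 else 0)"

lemma omega_psd: "psd (n*n) (omega n)"
proof -
  let ?N = "n*n"
  have c: "omega n \<in> carrier_mat ?N ?N" unfolding omega_def by simp
  have h: "mat_adjoint (omega n) = omega n" by (rule eq_matI) (auto simp: omega_def)
  have p: "0 \<le> Re (conjugate v \<bullet> (omega n *\<^sub>v v))" if v: "v \<in> carrier_vec ?N" for v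
  proof -
    define t where "t = (\<Sum>q<?N. if q div n = q mod n then v $ q else 0)"
    have ov: "(omega n *\<^sub>v v) $ p = (if p div n = p mod n then t else 0)" if p: "p < ?N" for p
    proof -
      have "(omega n *\<^sub>v v) $ p = (\<Sum>q<?N. omega n $$ (p,q) * v $ q)"
        using p v c by (simp add: scalar_prod_def atLeast0LessThan)
      also have "\<dots> = (\<Sum>q<?N. if p div n = p mod n then (if q div n = q mod n then v $ q else 0) else 0)"
        using p by (intro sum.cong refl) (auto simp: omega_def)
      finally show ?thesis unfolding t_def by simp
    qed
    have "conjugate v \<bullet> (omega n *\<^sub>v v) = (\<Sum>p<?N. cnj (v $ p) * (omega n *\<^sub>v v) $ p)"
      using v c by (simp add: scalar_prod_def atLeast0LessThan conjugate_complex_def)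
    also have "\<dots> = (\<Sum>p<?N. (if p div n = p mod n then cnj (v $ p) else 0) * t)"
      by (intro sum.cong refl) (auto simp: ov)
    also have "\<dots> = cnj t * t" unfolding t_def by (simp add: sum_distrib_right if_distrib cong: if_cong)
    finally show ?thesis by (simp add: complex_mult_cnj mult.commute)
  qed
  show ?thesis unfolding psd_def using c h p by auto
qed

lemma kuk: assumes K: "(K::cmat) \<in> carrier_mat n n" and ab: "a < n" "b < n" and rs: "r < n" "s < n"
  shows "(K * unitm n a b * mat_adjoint K) $$ (r,s) = K $$ (r,a) * cnj (K $$ (s,b))"
proof -
  have e1: "(K * unitm n a b) $$ (r,l) = (if l = b then K $$ (r,a) else 0)" if l: "l < n" for l
  proof -
    have "(K * unitm n a b) $$ (r,l) = (\<Sum>i<n. K $$ (r,i) * unitm n a b $$ (i,l))"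
      by (rule mult_index_sum'[OF K unitm_carrier rs(1) l])
    also have "\<dots> = (\<Sum>i<n. if i = a then (if l = b then K $$ (r,a) else 0) else 0)"
      using l by (intro sum.cong refl) (auto simp: unitm_def)
    finally show ?thesis using ab by simp
  qed
  have "(K * unitm n a b * mat_adjoint K) $$ (r,s) = (\<Sum>l<n. (K * unitm n a b) $$ (r,l) * mat_adjoint K $$ (l,s))"
    by (rule mult_index_sum'[of _ n n _ n]) (use K rs in auto)
  also have "\<dots> = (\<Sum>l<n. if l = b then K $$ (r,a) * cnj (K $$ (s,b)) else 0)"
    using K rs by (intro sum.cong refl) (auto simp: e1)
  finally show ?thesis using ab by simp
qed

lemma choi:
  assumes ch: "channel n R"
  shows "\<exists>Ks. (\<forall>K\<in>set Ks. K \<in> carrier_mat n n) \<and> (\<forall>\<rho>\<in>carrier_mat n n. R \<rho> = kraus_map n Ks \<rho>)"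
proof -
  let ?N = "n*n"
  have lin: "linear_map_mat n R" and cp: "completely_positive n R" using ch unfolding channel_def by auto
  define C where "C = ampl n n R (omega n)"
  have Cp: "psd ?N C" unfolding C_def using cp omega_psd unfolding completely_positive_def by auto
  then have Cc: "C \<in> carrier_mat ?N ?N" and Ch: "mat_adjoint C = C" unfolding psd_def by auto
  from hermitian_decomp[OF Cc Ch] obtain V d where Vc: "V \<in> carrier_mat ?N ?N" and VV: "mat_adjoint V * V = 1\<^sub>m ?N"
    and Ce: "C = V * diagm ?N d * mat_adjoint V" by blast
  have dpos: "d k \<ge> 0" if "k < ?N" for k by (rule psd_eig_nonneg[OF Cp Vc VV Ce that])
  define Kk where "Kk k = mat n n (\<lambda>(r,a). complex_of_real (sqrt (d k)) * V $$ (a*n + r, k))" for k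
  define Ks where "Ks = map Kk [0..<?N]"
  have kc: "\<forall>K\<in>set Ks. K \<in> carrier_mat n n" unfolding Ks_def Kk_def by auto
  have agree: "\<forall>a<n. \<forall>b<n. R (unitm n a b) = kraus_map n Ks (unitm n a b)"
  proof (intro allI impI)
    fix a b assume ab: "a < n" "b < n"
    have Rc: "R (unitm n a b) \<in> carrier_mat n n" using lin unfolding linear_map_mat_def by auto
    have kc2: "kraus_map n Ks (unitm n a b) \<in> carrier_mat n n" using kc by simp
    show "R (unitm n a b) = kraus_map n Ks (unitm n a b)"
    proof (rule eq_matI)
      fix r s assume "r < dim_row (kraus_map n Ks (unitm n a b))" "s < dim_col (kraus_map n Ks (unitm n a b))"
      then have rs: "r < n" "s < n" using kc2 by auto
      have p: "a*n + r < ?N" and q: "b*n+s < ?N" using block_lt ab rs by auto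
      have blk: "mat n n (\<lambda>(r', s'). omega n $$ ((a*n+r) div n * n + r', (b*n+s) div n * n + s')) = unitm n a b"
        by (rule eq_matI) (use rs ab block_lt[OF ab(1)] block_lt[OF ab(2)] in \<open>auto simp: omega_def unitm_def\<close>)
      have "R (unitm n a b) $$ (r,s) = C $$ (a*n+r, b*n+s)"
        unfolding C_def ampl_def using p q rs blk by simp
      also have "\<dots> = (\<Sum>k<?N. V $$ (a*n+r,k) * complex_of_real (d k) * cnj (V $$ (b*n+s,k)))"
        unfolding Ce by (rule udu_index[OF Vc p q])
      also have "\<dots> = (\<Sum>k<?N. Kk k $$ (r,a) * cnj (Kk k $$ (s,b)))"
      proof (intro sum.cong refl)
        fix k assume "k \<in> {..<?N}"
        then have k: "k < ?N" by simp
        have "complex_of_real (sqrt (d k)) * cnj (complex_of_real (sqrt (d k))) = complex_of_real (d k)"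
          using dpos[OF k] by (simp flip: of_real_mult)
        then show "V $$ (a*n+r,k) * complex_of_real (d k) * cnj (V $$ (b*n+s,k)) = Kk k $$ (r,a) * cnj (Kk k $$ (s,b))"
          using rs ab by (simp add: Kk_def algebra_simps)
      qed
      also have "\<dots> = (\<Sum>K\<leftarrow>Ks. (K * unitm n a b * mat_adjoint K) $$ (r,s))"
      proof -
        have "(\<Sum>K\<leftarrow>Ks. (K * unitm n a b * mat_adjoint K) $$ (r,s)) = (\<Sum>k\<leftarrow>[0..<?N]. (Kk k * unitm n a b * mat_adjoint (Kk k)) $$ (r,s))"
          unfolding Ks_def by (simp add: comp_def)
        also have "\<dots> = (\<Sum>k\<leftarrow>[0..<?N]. Kk k $$ (r,a) * cnj (Kk k $$ (s,b)))"
          by (intro arg_cong[where f=sum_list] map_cong refl kuk[OF _ ab rs]) (simp add: Kk_def)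
        also have "\<dots> = (\<Sum>k<?N. Kk k $$ (r,a) * cnj (Kk k $$ (s,b)))"
          by (simp add: sum_set_upt_conv_sum_list_nat[symmetric] atLeast0LessThan)
        finally show ?thesis by simp
      qed
      also have "\<dots> = kraus_map n Ks (unitm n a b) $$ (r,s)"
        unfolding kraus_map_def by (rule msum_map_index[symmetric]) (use kc rs in auto)
      finally show "R (unitm n a b) $$ (r,s) = kraus_map n Ks (unitm n a b) $$ (r,s)" .
    qed (use Rc kc2 in auto)
  qed
  have "\<forall>\<rho>\<in>carrier_mat n n. R \<rho> = kraus_map n Ks \<rho>"
    by (rule linear_ext[OF lin kraus_linear[OF kc] agree])
  then show ?thesis using kc by blast
qed

lemma choi_tp:
  assumes kc: "\<forall>K\<in>set Ks. K \<in> carrier_mat n n" and R: "\<forall>\<rho>\<in>carrier_mat n n. R \<rho> = kraus_map n Ks \<rho>"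
    and tp: "trace_preserving n R"
  shows "kd n Ks (1\<^sub>m n) = 1\<^sub>m n"
proof (rule trace_ext[of _ n])
  show "kd n Ks (1\<^sub>m n) \<in> carrier_mat n n" using kc by simp
  show "1\<^sub>m n \<in> carrier_mat n n" by simp
  show "\<forall>\<rho>\<in>carrier_mat n n. mtrace (\<rho> * kd n Ks (1\<^sub>m n)) = mtrace (\<rho> * 1\<^sub>m n)"
  proof
    fix \<rho> :: cmat assume r: "\<rho> \<in> carrier_mat n n"
    have kr: "kraus_map n Ks \<rho> \<in> carrier_mat n n" using kc r by simp
    have "mtrace (\<rho> * kd n Ks (1\<^sub>m n)) = mtrace (kraus_map n Ks \<rho> * 1\<^sub>m n)"
      by (rule kraus_trace_dual[OF kc r, symmetric]) simp
    also have "\<dots> = mtrace (R \<rho>)" using R r kr by (simp add: right_mult_one_mat[OF kr])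
    also have "\<dots> = mtrace \<rho>" using tp r unfolding trace_preserving_def by auto
    finally show "mtrace (\<rho> * kd n Ks (1\<^sub>m n)) = mtrace (\<rho> * 1\<^sub>m n)" using r by (simp add: right_mult_one_mat[OF r])
  qed
qed

lemma adj_mult_sq[simp]: "(A::cmat) \<in> carrier_mat n n \<Longrightarrow> B \<in> carrier_mat n n \<Longrightarrow> mat_adjoint (A * B) = mat_adjoint B * mat_adjoint A"
  by (rule adj_mult)

lemma kd_sandwich:
  assumes kc: "\<forall>K\<in>set Ks. K \<in> carrier_mat n n" and L: "L \<in> carrier_mat n n" and R: "R \<in> carrier_mat n n"
    and Y: "Y \<in> carrier_mat n n"
  shows "msum n (map (\<lambda>K. L * (mat_adjoint K * Y * K) * R) Ks) = L * kd n Ks Y * R"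
proof -
  have "L * kd n Ks Y = msum n (map (\<lambda>K. L * (mat_adjoint K * Y * K)) Ks)"
    unfolding kd_def by (rule msum_mult_left[OF L]) (use kc Y in auto)
  moreover have "msum n (map (\<lambda>K. L * (mat_adjoint K * Y * K)) Ks) * R = msum n (map (\<lambda>K. L * (mat_adjoint K * Y * K) * R) Ks)"
    by (rule msum_mult_right[OF R]) (use kc Y L in auto)
  ultimately show ?thesis by simp
qed

lemma msum_concat_map:
  assumes "\<forall>x\<in>set xs. \<forall>y\<in>set (g x). f y \<in> carrier_mat n n"
  shows "msum n (map f (concat (map g xs))) = msum n (map (\<lambda>x. msum n (map f (g x))) xs)"
  using assms
proof (induct xs)
  case Nil then show ?case by simp
next
  case (Cons x xs)
  have "msum n (map f (g x @ concat (map g xs))) = msum n (map f (g x)) + msum n (map f (concat (map g xs)))"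
    by (simp only: map_append, rule msum_append) (use Cons.prems in auto)
  then show ?case using Cons by simp
qed

definition comp_list :: "cmat list \<Rightarrow> cmat list \<Rightarrow> cmat list" where
  "comp_list Ks Es = concat (map (\<lambda>E. map (\<lambda>K. K * E) Ks) Es)"

lemma comp_list_carrier: "\<forall>K\<in>set Ks. K \<in> carrier_mat n n \<Longrightarrow> \<forall>E\<in>set Es. E \<in> carrier_mat n n \<Longrightarrow>
   \<forall>F\<in>set (comp_list Ks Es). F \<in> carrier_mat n n"
  unfolding comp_list_def by auto

lemma kd_comp:
  assumes kc: "\<forall>K\<in>set Ks. K \<in> carrier_mat n n" and ec: "\<forall>E\<in>set Es. E \<in> carrier_mat n n" and Y: "Y \<in> carrier_mat n n"
  shows "kd n (comp_list Ks Es) Y = kd n Es (kd n Ks Y)"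
proof -
  have "kd n (comp_list Ks Es) Y = msum n (map (\<lambda>E. msum n (map (\<lambda>F. mat_adjoint F * Y * F) (map (\<lambda>K. K * E) Ks))) Es)"
    unfolding kd_def comp_list_def by (rule msum_concat_map) (use kc ec Y in auto)
  also have "\<dots> = msum n (map (\<lambda>E. mat_adjoint E * kd n Ks Y * E) Es)"
  proof (rule msum_cong)
    fix E assume "E \<in> set Es"
    then have E: "E \<in> carrier_mat n n" using ec by auto
    have "msum n (map (\<lambda>F. mat_adjoint F * Y * F) (map (\<lambda>K. K * E) Ks)) = msum n (map (\<lambda>K. mat_adjoint E * (mat_adjoint K * Y * K) * E) Ks)"
    proof (simp add: comp_def, rule msum_cong)
      fix K assume "K \<in> set Ks"
      then have K: "K \<in> carrier_mat n n" using kc by auto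
      show "mat_adjoint (K * E) * Y * (K * E) = mat_adjoint E * (mat_adjoint K * Y * K) * E"
        using K E Y by (simp add: assoc_mult_mat[of _ n n _ n _ n])
    qed
    also have "\<dots> = mat_adjoint E * kd n Ks Y * E" by (rule kd_sandwich) (use kc E Y in auto)
    finally show "msum n (map (\<lambda>F. mat_adjoint F * Y * F) (map (\<lambda>K. K * E) Ks)) = mat_adjoint E * kd n Ks Y * E" .
  qed
  finally show ?thesis unfolding kd_def by simp
qed

lemma kd_one: "\<forall>E\<in>set Es. E \<in> carrier_mat n n \<Longrightarrow> kd n Es (1\<^sub>m n) = msum n (map (\<lambda>E. mat_adjoint E * E) Es)"
  unfolding kd_def by (rule msum_cong) auto

lemma cnj_mult_self: "cnj z * z = complex_of_real ((cmod z)^2)"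
  by (metis complex_norm_square mult.commute)

lemma mtrace_adj_self: assumes Z: "(Z::cmat) \<in> carrier_mat n n"
  shows "mtrace (mat_adjoint Z * Z) = complex_of_real (\<Sum>i<n. \<Sum>j<n. (cmod (Z $$ (j,i)))\<^sup>2)"
proof -
  have "mtrace (mat_adjoint Z * Z) = (\<Sum>i<n. (mat_adjoint Z * Z) $$ (i,i))"
    unfolding mtrace_def using Z by (simp only: index_mult_mat(2) adj_dims carrier_matD)
  also have "\<dots> = (\<Sum>i<n. \<Sum>j<n. cnj (Z $$ (j,i)) * Z $$ (j,i))"
    by (intro sum.cong refl, subst mult_index_sum'[OF adj_carrier[OF Z] Z]) (use Z in auto)
  also have "\<dots> = (\<Sum>i<n. \<Sum>j<n. complex_of_real ((cmod (Z $$ (j,i)))\<^sup>2))"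
    by (intro sum.cong refl) (rule cnj_mult_self)
  finally show ?thesis by simp
qed

lemma msum_adj_self_zero:
  assumes Z: "\<forall>x\<in>set xs. Z x \<in> carrier_mat n n" and s: "msum n (map (\<lambda>x. mat_adjoint (Z x) * Z x) xs) = 0\<^sub>m n n"
  shows "\<forall>x\<in>set xs. Z x = 0\<^sub>m n n"
proof
  fix x assume x: "x \<in> set xs"
  define g where "g y = (\<Sum>i<n. \<Sum>j<n. (cmod (Z y $$ (j,i)))\<^sup>2)" for y
  have "0 = mtrace (msum n (map (\<lambda>x. mat_adjoint (Z x) * Z x) xs))" using s by simp
  also have "\<dots> = (\<Sum>y\<leftarrow>xs. mtrace (mat_adjoint (Z y) * Z y))" using Z by simp
  also have "\<dots> = (\<Sum>y\<leftarrow>xs. complex_of_real (g y))"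
    unfolding g_def using Z by (intro arg_cong[where f=sum_list] map_cong refl mtrace_adj_self) auto
  also have "\<dots> = complex_of_real (\<Sum>y\<leftarrow>xs. g y)" by (induct xs) auto
  finally have "(\<Sum>y\<leftarrow>xs. g y) = 0" by simp
  moreover have "\<forall>y\<in>set xs. g y \<ge> 0" unfolding g_def by (auto intro!: sum_nonneg)
  ultimately have "\<forall>y\<in>set xs. g y = 0" using sum_list_nonneg_eq_0_iff[of "map g xs"] by auto
  then have gx: "g x = 0" using x by auto
  have Zx: "Z x \<in> carrier_mat n n" using Z x by auto
  show "Z x = 0\<^sub>m n n"
  proof (rule eq_matI)
    fix j i assume ji: "j < dim_row (0\<^sub>m n n :: cmat)" "i < dim_col (0\<^sub>m n n :: cmat)"
    have "(\<Sum>j<n. (cmod (Z x $$ (j,i)))\<^sup>2) = 0"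
      using gx unfolding g_def by (subst (asm) sum_nonneg_eq_0_iff) (use ji in \<open>auto intro: sum_nonneg\<close>)
    then have "(cmod (Z x $$ (j,i)))\<^sup>2 = 0"
      by (subst (asm) sum_nonneg_eq_0_iff) (use ji in auto)
    then show "Z x $$ (j,i) = 0\<^sub>m n n $$ (j,i)" using ji by simp
  qed (use Zx in auto)
qed

lemma sq_expand:
  assumes A: "(A::cmat) \<in> carrier_mat n n" and B: "B \<in> carrier_mat n n"
  shows "mat_adjoint (A - B) * (A - B) = (mat_adjoint A * A - mat_adjoint A * B) - (mat_adjoint B * A - mat_adjoint B * B)"
proof -
  have "mat_adjoint (A - B) * (A - B) = (mat_adjoint A - mat_adjoint B) * (A - B)" using adj_minus[OF A B] by simp
  also have "\<dots> = mat_adjoint A * (A - B) - mat_adjoint B * (A - B)"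
    by (rule minus_mult_distrib_mat[of _ n n]) (use A B in auto)
  also have "mat_adjoint A * (A - B) = mat_adjoint A * A - mat_adjoint A * B"
    by (rule mult_minus_distrib_mat[of _ n n]) (use A B in auto)
  also have "mat_adjoint B * (A - B) = mat_adjoint B * A - mat_adjoint B * B"
    by (rule mult_minus_distrib_mat[of _ n n]) (use A B in auto)
  finally show ?thesis .
qed

lemma minus_zero_eq: assumes "(A::cmat) \<in> carrier_mat n n" "B \<in> carrier_mat n n" "A - B = 0\<^sub>m n n" shows "A = B"
proof (rule eq_matI)
  fix i j assume ij: "i < dim_row B" "j < dim_col B"
  have "(A - B) $$ (i,j) = 0" using assms(3) ij assms(2) by simp
  moreover have "(A - B) $$ (i,j) = A $$ (i,j) - B $$ (i,j)" using ij assms(1,2) by simp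
  ultimately show "A $$ (i,j) = B $$ (i,j)" by simp
qed (use assms in auto)

lemma key_nec:
  assumes Fc: "\<forall>F\<in>set Fs. F \<in> carrier_mat n n" and Pc: "P \<in> carrier_mat n n" and Ph: "mat_adjoint P = P"
    and PP: "P * P = P" and Xc: "X \<in> carrier_mat n n" and PXP: "P * X * P = X"
    and u: "kd n Fs (1\<^sub>m n) = 1\<^sub>m n"
    and h1: "P * kd n Fs X * P = X" and h2: "P * kd n Fs (mat_adjoint X) * P = mat_adjoint X"
    and h3: "P * kd n Fs (mat_adjoint X * X) * P = mat_adjoint X * X"
  shows "\<forall>F\<in>set Fs. F * P * X = X * F * P"
proof -
  note as = assoc_mult_mat[of _ n n _ n _ n]
  have Xa: "mat_adjoint X \<in> carrier_mat n n" using Xc by simp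
  have PX: "P * X = X"
  proof -
    have "P * X = P * (P * X * P)" using PXP by simp
    also have "\<dots> = (P * P) * X * P" using Pc Xc by (simp add: as)
    finally show ?thesis using PP PXP by simp
  qed
  define Z where "Z F = F * P * X - X * F * P" for F
  have Zc: "\<forall>F\<in>set Fs. Z F \<in> carrier_mat n n" unfolding Z_def using Fc Pc Xc by auto
  define a1 where "a1 F = mat_adjoint X * P * (mat_adjoint F * 1\<^sub>m n * F) * (P * X)" for F
  define a2 where "a2 F = mat_adjoint X * P * (mat_adjoint F * X * F) * P" for F
  define a3 where "a3 F = P * (mat_adjoint F * mat_adjoint X * F) * (P * X)" for F
  define a4 where "a4 F = P * (mat_adjoint F * (mat_adjoint X * X) * F) * P" for F
  have pw: "mat_adjoint (Z F) * Z F = (a1 F - a2 F) - (a3 F - a4 F)" if F: "F \<in> set Fs" for F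
  proof -
    have Fc': "F \<in> carrier_mat n n" using F Fc by auto
    have e1: "mat_adjoint (F * P * X) * (F * P * X) = a1 F"
      unfolding a1_def using Fc' Pc Xc Ph by (simp add: as right_mult_one_mat[OF adj_carrier[OF Fc']])
    have e2: "mat_adjoint (F * P * X) * (X * F * P) = a2 F"
      unfolding a2_def using Fc' Pc Xc Ph by (simp add: as)
    have e3: "mat_adjoint (X * F * P) * (F * P * X) = a3 F"
      unfolding a3_def using Fc' Pc Xc Ph by (simp add: as)
    have e4: "mat_adjoint (X * F * P) * (X * F * P) = a4 F"
      unfolding a4_def using Fc' Pc Xc Ph by (simp add: as)
    show ?thesis unfolding Z_def
      by (subst sq_expand[of _ n]) (use Fc' Pc Xc e1 e2 e3 e4 in auto)
  qed
  have ac: "\<forall>F\<in>set Fs. a1 F \<in> carrier_mat n n \<and> a2 F \<in> carrier_mat n n \<and> a3 F \<in> carrier_mat n n \<and> a4 F \<in> carrier_mat n n"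
    unfolding a1_def a2_def a3_def a4_def using Fc Pc Xc by auto
  have s1: "msum n (map a1 Fs) = mat_adjoint X * X"
  proof -
    have "msum n (map a1 Fs) = mat_adjoint X * P * kd n Fs (1\<^sub>m n) * (P * X)"
      unfolding a1_def by (rule kd_sandwich) (use Fc Pc Xc in auto)
    also have "\<dots> = mat_adjoint X * (P * X)" unfolding u using Pc Xc PP PX by (simp add: as)
    finally show ?thesis using PX by simp
  qed
  have s2: "msum n (map a2 Fs) = mat_adjoint X * X"
  proof -
    have "msum n (map a2 Fs) = mat_adjoint X * P * kd n Fs X * P"
      unfolding a2_def by (rule kd_sandwich) (use Fc Pc Xc in auto)
    also have "\<dots> = mat_adjoint X * (P * kd n Fs X * P)" using Pc Xc Fc by (simp add: as)
    finally show ?thesis using h1 by simp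
  qed
  have s3: "msum n (map a3 Fs) = mat_adjoint X * X"
  proof -
    have "msum n (map a3 Fs) = P * kd n Fs (mat_adjoint X) * (P * X)"
      unfolding a3_def by (rule kd_sandwich) (use Fc Pc Xc in auto)
    also have "\<dots> = (P * kd n Fs (mat_adjoint X) * P) * X" using Pc Xc Fc by (simp add: as)
    finally show ?thesis using h2 by simp
  qed
  have s4: "msum n (map a4 Fs) = mat_adjoint X * X"
    unfolding a4_def using h3 by (subst kd_sandwich) (use Fc Pc Xc in auto)
  have XXc: "mat_adjoint X * X \<in> carrier_mat n n" using Xc by simp
  have "msum n (map (\<lambda>F. mat_adjoint (Z F) * Z F) Fs) = msum n (map (\<lambda>F. (a1 F - a2 F) - (a3 F - a4 F)) Fs)"
    by (rule msum_cong) (use pw in auto)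
  also have "\<dots> = msum n (map (\<lambda>F. a1 F - a2 F) Fs) - msum n (map (\<lambda>F. a3 F - a4 F) Fs)"
    by (rule msum_minus) (use ac in auto)
  also have "msum n (map (\<lambda>F. a1 F - a2 F) Fs) = msum n (map a1 Fs) - msum n (map a2 Fs)"
    by (rule msum_minus) (use ac in auto)
  also have "msum n (map (\<lambda>F. a3 F - a4 F) Fs) = msum n (map a3 Fs) - msum n (map a4 Fs)"
    by (rule msum_minus) (use ac in auto)
  finally have "msum n (map (\<lambda>F. mat_adjoint (Z F) * Z F) Fs) = 0\<^sub>m n n"
    unfolding s1 s2 s3 s4 using XXc by simp
  from msum_adj_self_zero[OF Zc this] have "\<forall>F\<in>set Fs. Z F = 0\<^sub>m n n" .
  then show ?thesis unfolding Z_def using Fc Pc Xc by (auto intro: minus_zero_eq[of _ n])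
qed

lemma nec_final:
  assumes Kc: "\<forall>K\<in>set Ks. K \<in> carrier_mat n n" and Pc: "P \<in> carrier_mat n n" and Ph: "mat_adjoint P = P"
    and Xc: "X \<in> carrier_mat n n" and u: "kd n Ks (1\<^sub>m n) = 1\<^sub>m n"
    and Eb: "Eb \<in> carrier_mat n n" and Ec: "Ec \<in> carrier_mat n n"
    and cb: "\<forall>K\<in>set Ks. (K * Eb) * P * X = X * (K * Eb) * P"
    and cc: "\<forall>K\<in>set Ks. (K * Ec) * P * mat_adjoint X = mat_adjoint X * (K * Ec) * P"
  shows "P * mat_adjoint Ec * Eb * P * X = X * (P * mat_adjoint Ec * Eb * P)"
proof -
  note as = assoc_mult_mat[of _ n n _ n _ n]
  let ?L = "P * mat_adjoint Ec"
  have Lc: "?L \<in> carrier_mat n n" using Pc Ec by simp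
  have pw: "?L * (mat_adjoint K * 1\<^sub>m n * K) * (Eb * P * X) = (X * ?L) * (mat_adjoint K * 1\<^sub>m n * K) * (Eb * P)"
    if K: "K \<in> set Ks" for K
  proof -
    have K': "K \<in> carrier_mat n n" using K Kc by auto
    have Ka: "mat_adjoint K \<in> carrier_mat n n" using K' by simp
    have one: "mat_adjoint K * 1\<^sub>m n = mat_adjoint K" by (rule right_mult_one_mat[OF Ka])
    have b0: "mat_adjoint ((K * Ec) * P * mat_adjoint X) = mat_adjoint (mat_adjoint X * (K * Ec) * P)"
      using cc K by simp
    have l: "mat_adjoint ((K * Ec) * P * mat_adjoint X) = X * (P * (mat_adjoint Ec * mat_adjoint K))"
      using K' Ec Pc Xc Ph by (simp add: as adj_mult[of _ n n _ n])
    have r: "mat_adjoint (mat_adjoint X * (K * Ec) * P) = P * (mat_adjoint Ec * (mat_adjoint K * X))"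
      using K' Ec Pc Xc Ph by (simp add: as adj_mult[of _ n n _ n])
    have b: "P * (mat_adjoint Ec * (mat_adjoint K * X)) = X * (P * (mat_adjoint Ec * mat_adjoint K))"
      using b0 l r by simp
    have c0: "(K * Eb) * P * X = X * (K * Eb) * P" using cb K by simp
    have c: "K * (Eb * (P * X)) = X * (K * (Eb * P))" using c0 K' Eb Pc Xc by (simp add: as)
    have "?L * (mat_adjoint K * 1\<^sub>m n * K) * (Eb * P * X) = P * (mat_adjoint Ec * (mat_adjoint K * (K * (Eb * (P * X)))))"
      unfolding one using K' Eb Ec Pc Xc by (simp add: as)
    also have "\<dots> = P * (mat_adjoint Ec * (mat_adjoint K * (X * (K * (Eb * P)))))" unfolding c ..
    also have "\<dots> = (P * (mat_adjoint Ec * (mat_adjoint K * X))) * (K * (Eb * P))"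
      using K' Eb Ec Pc Xc by (simp add: as)
    also have "\<dots> = (X * (P * (mat_adjoint Ec * mat_adjoint K))) * (K * (Eb * P))" unfolding b ..
    also have "\<dots> = (X * ?L) * (mat_adjoint K * 1\<^sub>m n * K) * (Eb * P)"
      unfolding one using K' Eb Ec Pc Xc by (simp add: as)
    finally show ?thesis .
  qed
  have "P * mat_adjoint Ec * Eb * P * X = ?L * kd n Ks (1\<^sub>m n) * (Eb * P * X)"
    unfolding u using Pc Ec Eb Xc by (simp add: as)
  also have "\<dots> = msum n (map (\<lambda>K. ?L * (mat_adjoint K * 1\<^sub>m n * K) * (Eb * P * X)) Ks)"
    by (rule kd_sandwich[symmetric]) (use Kc Lc Eb Pc Xc in auto)
  also have "\<dots> = msum n (map (\<lambda>K. (X * ?L) * (mat_adjoint K * 1\<^sub>m n * K) * (Eb * P)) Ks)"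
    by (rule msum_cong) (use pw in auto)
  also have "\<dots> = (X * ?L) * kd n Ks (1\<^sub>m n) * (Eb * P)"
    by (rule kd_sandwich) (use Kc Lc Eb Pc Xc in auto)
  also have "\<dots> = X * (P * mat_adjoint Ec * Eb * P)"
    unfolding u using Pc Ec Eb Xc by (simp add: as)
  finally show ?thesis .
qed

lemma necessity:
  assumes op: "orth_proj n P" and ec: "\<forall>E \<in> set Es. E \<in> carrier_mat n n"
    and es: "msum n (map (\<lambda>E. mat_adjoint E * E) Es) = 1\<^sub>m n"
    and sa: "star_subalgebra_on n P \<A>"
    and ch: "channel n R" and rec: "\<forall>X \<in> \<A>. P * dual_map n (R \<circ> kraus_map n Es) X * P = P * X * P"
  shows "\<forall>X \<in> \<A>. \<forall>b < length Es. \<forall>c < length Es.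
            (P * mat_adjoint (Es ! c) * (Es ! b) * P) * X = X * (P * mat_adjoint (Es ! c) * (Es ! b) * P)"
proof (intro ballI allI impI)
  fix X b c assume X: "X \<in> \<A>" and b: "b < length Es" and c: "c < length Es"
  have Pc: "P \<in> carrier_mat n n" and PP: "P * P = P" and Ph: "mat_adjoint P = P" using op unfolding orth_proj_def by auto
  have Asub: "\<A> \<subseteq> carrier_mat n n" and APA: "\<forall>X\<in>\<A>. P * X * P = X"
    and Amul: "\<forall>X\<in>\<A>. \<forall>Y\<in>\<A>. X * Y \<in> \<A>" and Aadj: "\<forall>X\<in>\<A>. mat_adjoint X \<in> \<A>"
    using sa unfolding star_subalgebra_on_def by auto
  obtain Ks where kc: "\<forall>K\<in>set Ks. K \<in> carrier_mat n n" and RK: "\<forall>\<rho>\<in>carrier_mat n n. R \<rho> = kraus_map n Ks \<rho>"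
    using choi[OF ch] by blast
  have ku: "kd n Ks (1\<^sub>m n) = 1\<^sub>m n"
    by (rule choi_tp[OF kc RK]) (use ch in \<open>auto simp: channel_def\<close>)
  define Fs where "Fs = comp_list Ks Es"
  have Fc: "\<forall>F\<in>set Fs. F \<in> carrier_mat n n" unfolding Fs_def by (rule comp_list_carrier[OF kc ec])
  have dual: "dual_map n (R \<circ> kraus_map n Es) Y = kd n Fs Y" if "Y \<in> carrier_mat n n" for Y
    unfolding Fs_def using dual_comp_kraus[OF kc ec RK that] kd_comp[OF kc ec that] by simp
  have Fu: "kd n Fs (1\<^sub>m n) = 1\<^sub>m n"
    unfolding Fs_def kd_comp[OF kc ec one_carrier_mat] ku kd_one[OF ec] es ..
  have hA: "P * kd n Fs Y * P = Y" if Y: "Y \<in> \<A>" for Y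
  proof -
    have Yc: "Y \<in> carrier_mat n n" using Y Asub by auto
    have "P * dual_map n (R \<circ> kraus_map n Es) Y * P = P * Y * P" using rec Y by blast
    then have "P * kd n Fs Y * P = P * Y * P" unfolding dual[OF Yc] .
    then show ?thesis using APA Y by simp
  qed
  have comm: "\<forall>F\<in>set Fs. F * P * Z = Z * F * P" if Z: "Z \<in> \<A>" for Z
  proof (rule key_nec[OF Fc Pc Ph PP _ _ Fu])
    show "Z \<in> carrier_mat n n" using Z Asub by auto
    show "P * Z * P = Z" using Z APA by auto
    show "P * kd n Fs Z * P = Z" by (rule hA[OF Z])
    show "P * kd n Fs (mat_adjoint Z) * P = mat_adjoint Z" by (rule hA) (use Z Aadj in auto)
    show "P * kd n Fs (mat_adjoint Z * Z) * P = mat_adjoint Z * Z" by (rule hA) (use Z Aadj Amul in auto)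
  qed
  have Eb: "Es ! b \<in> carrier_mat n n" and Ec: "Es ! c \<in> carrier_mat n n" using ec b c by auto
  have inF: "K * (Es ! i) \<in> set Fs" if "K \<in> set Ks" "i < length Es" for K i
    unfolding Fs_def comp_list_def using that by auto
  have Xc: "X \<in> carrier_mat n n" using X Asub by auto
  have cb: "\<forall>K\<in>set Ks. (K * Es ! b) * P * X = X * (K * Es ! b) * P"
    using comm[OF X] inF[OF _ b] by auto
  have cc: "\<forall>K\<in>set Ks. (K * Es ! c) * P * mat_adjoint X = mat_adjoint X * (K * Es ! c) * P"
    using comm[of "mat_adjoint X"] Aadj X inF[OF _ c] by auto
  show "(P * mat_adjoint (Es ! c) * (Es ! b) * P) * X = X * (P * mat_adjoint (Es ! c) * (Es ! b) * P)"
    by (rule nec_final[OF kc Pc Ph Xc ku Eb Ec cb cc])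
qed

lemma blk_sandwich:
  assumes S: "(S::cmat) \<in> carrier_mat n N" and Y: "Y \<in> carrier_mat n n"
    and G1: "G1 \<in> carrier_mat n n" and G2: "G2 \<in> carrier_mat n n"
    and g1: "\<forall>r<n. \<forall>i<n. G1 $$ (r,i) = S $$ (r, p0 + i)"
    and g2: "\<forall>r<n. \<forall>j<n. G2 $$ (r,j) = S $$ (r, q0 + j)"
    and i: "i < n" and j: "j < n" and p: "p0 + i < N" and q: "q0 + j < N"
  shows "(mat_adjoint G1 * Y * G2) $$ (i,j) = (mat_adjoint S * Y * S) $$ (p0+i, q0+j)"
proof -
  have SY: "mat_adjoint S * Y \<in> carrier_mat N n" using S Y by (intro mult_carrier_mat) auto
  have GY: "mat_adjoint G1 * Y \<in> carrier_mat n n" using G1 Y by simp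
  have "(mat_adjoint G1 * Y * G2) $$ (i,j) = (\<Sum>s<n. (mat_adjoint G1 * Y) $$ (i,s) * G2 $$ (s,j))"
    by (rule mult_index_sum'[OF GY G2 i j])
  also have "\<dots> = (\<Sum>s<n. (mat_adjoint S * Y) $$ (p0+i,s) * S $$ (s,q0+j))"
  proof (intro sum.cong refl)
    fix s assume "s \<in> {..<n}" then have s: "s < n" by simp
    have "(mat_adjoint G1 * Y) $$ (i,s) = (\<Sum>r<n. mat_adjoint G1 $$ (i,r) * Y $$ (r,s))"
      by (rule mult_index_sum'[OF adj_carrier[OF G1] Y i s])
    also have "\<dots> = (\<Sum>r<n. mat_adjoint S $$ (p0+i,r) * Y $$ (r,s))"
      using G1 S g1 i p by (intro sum.cong refl) auto
    also have "\<dots> = (mat_adjoint S * Y) $$ (p0+i,s)"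
      by (rule mult_index_sum'[OF adj_carrier[OF S] Y p s, symmetric])
    finally show "(mat_adjoint G1 * Y) $$ (i,s) * G2 $$ (s,j) = (mat_adjoint S * Y) $$ (p0+i,s) * S $$ (s,q0+j)"
      using g2 s j by simp
  qed
  also have "\<dots> = (mat_adjoint S * Y * S) $$ (p0+i, q0+j)"
    by (rule mult_index_sum'[OF SY S p q, symmetric])
  finally show ?thesis .
qed

definition ptr :: "nat \<Rightarrow> nat \<Rightarrow> cmat \<Rightarrow> cmat" where
  "ptr m n W = mat n n (\<lambda>(i,j). \<Sum>b<m. W $$ (b*n+i, b*n+j))"

lemma ptr_carrier[simp]: "ptr m n W \<in> carrier_mat n n" unfolding ptr_def by simp
lemma ptr_dims[simp]: "dim_row (ptr m n W) = n" "dim_col (ptr m n W) = n" unfolding ptr_def by auto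

lemma ptr_idt:
  assumes W: "W \<in> carrier_mat (m*n) (m*n)" and X: "X \<in> carrier_mat n n"
  shows "ptr m n (idt m n X * W) = X * ptr m n W"
proof (rule eq_matI)
  fix i j assume "i < dim_row (X * ptr m n W)" "j < dim_col (X * ptr m n W)"
  then have i: "i < n" and j: "j < n" using X by auto
  have "ptr m n (idt m n X * W) $$ (i,j) = (\<Sum>b<m. (idt m n X * W) $$ (b*n+i, b*n+j))"
    unfolding ptr_def using i j by simp
  also have "\<dots> = (\<Sum>b<m. \<Sum>l<n. X $$ (i,l) * W $$ (b*n+l, b*n+j))"
    by (intro sum.cong refl, subst idt_mult_index[OF W X]) (use i j block_lt in auto)
  also have "\<dots> = (\<Sum>l<n. X $$ (i,l) * (\<Sum>b<m. W $$ (b*n+l, b*n+j)))"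
    by (subst sum.swap) (simp add: sum_distrib_left)
  also have "\<dots> = (\<Sum>l<n. X $$ (i,l) * ptr m n W $$ (l,j))"
    using j by (intro sum.cong refl) (simp add: ptr_def)
  also have "\<dots> = (X * ptr m n W) $$ (i,j)"
    by (rule mult_index_sum'[OF X ptr_carrier i j, symmetric])
  finally show "ptr m n (idt m n X * W) $$ (i,j) = (X * ptr m n W) $$ (i,j)" .
qed (use X in auto)

lemma diagm_cong: "(\<And>k. k < N \<Longrightarrow> f k = g k) \<Longrightarrow> diagm N f = diagm N g"
  unfolding diagm_def by (rule eq_matI) auto

lemma adj_self_diag: assumes Z: "(Z::cmat) \<in> carrier_mat r c" and k: "k < c"
  shows "(mat_adjoint Z * Z) $$ (k,k) = complex_of_real (\<Sum>i<r. (cmod (Z $$ (i,k)))\<^sup>2)"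
proof -
  have "(mat_adjoint Z * Z) $$ (k,k) = (\<Sum>i<r. cnj (Z $$ (i,k)) * Z $$ (i,k))"
    by (subst mult_index_sum'[OF adj_carrier[OF Z] Z k k]) (use Z k in auto)
  also have "\<dots> = (\<Sum>i<r. complex_of_real ((cmod (Z $$ (i,k)))\<^sup>2))"
    by (intro sum.cong refl) (rule cnj_mult_self)
  finally show ?thesis by simp
qed

lemma adj_self_zero: assumes Z: "(Z::cmat) \<in> carrier_mat r c" and z: "mat_adjoint Z * Z = 0\<^sub>m c c"
  shows "Z = 0\<^sub>m r c"
proof (rule eq_matI)
  fix i k assume ik: "i < dim_row (0\<^sub>m r c :: cmat)" "k < dim_col (0\<^sub>m r c :: cmat)"
  have "(mat_adjoint Z * Z) $$ (k,k) = 0" using z ik by simp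
  then have "complex_of_real (\<Sum>i<r. (cmod (Z $$ (i,k)))\<^sup>2) = 0"
    using adj_self_diag[OF Z, of k] ik by simp
  then have "(\<Sum>i<r. (cmod (Z $$ (i,k)))\<^sup>2) = 0" by (simp only: of_real_eq_0_iff)
  then have "(cmod (Z $$ (i,k)))\<^sup>2 = 0"
    by (subst (asm) sum_nonneg_eq_0_iff) (use ik in auto)
  then show "Z $$ (i,k) = 0\<^sub>m r c $$ (i,k)" using ik by simp
qed (use Z in auto)

locale suff =
  fixes n :: nat and P :: cmat and Es :: "cmat list" and AA :: "cmat set"
  assumes op: "orth_proj n P" and ec: "\<forall>E \<in> set Es. E \<in> carrier_mat n n"
    and es: "msum n (map (\<lambda>E. mat_adjoint E * E) Es) = 1\<^sub>m n"
    and sa: "star_subalgebra_on n P AA"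
    and cm: "\<forall>X \<in> AA. \<forall>b < length Es. \<forall>c < length Es.
            (P * mat_adjoint (Es ! c) * (Es ! b) * P) * X = X * (P * mat_adjoint (Es ! c) * (Es ! b) * P)"
begin

abbreviation "m \<equiv> length Es"
abbreviation "NN \<equiv> m * n"

lemma Pc: "P \<in> carrier_mat n n" and PP: "P * P = P" and Ph: "mat_adjoint P = P"
  using op unfolding orth_proj_def by auto

lemma Asub: "AA \<subseteq> carrier_mat n n" and APA: "\<forall>X\<in>AA. P * X * P = X"
  using sa unfolding star_subalgebra_on_def by auto

lemma Ec: "b < m \<Longrightarrow> Es ! b \<in> carrier_mat n n" using ec by auto

definition S :: cmat where "S = mat n NN (\<lambda>(r,p). (Es ! (p div n) * P) $$ (r, p mod n))"

lemma Sc: "S \<in> carrier_mat n NN" unfolding S_def by simp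

lemma Sblk: "b < m \<Longrightarrow> \<forall>r<n. \<forall>j<n. (Es ! b * P) $$ (r,j) = S $$ (r, b*n+j)"
  unfolding S_def using block_lt by auto

lemma L2: assumes Y: "Y \<in> carrier_mat n n"
  shows "P * kd n Es Y * P = ptr m n (mat_adjoint S * Y * S)"
proof (rule eq_matI)
  fix i j assume "i < dim_row (ptr m n (mat_adjoint S * Y * S))" "j < dim_col (ptr m n (mat_adjoint S * Y * S))"
  then have i: "i < n" and j: "j < n" by auto
  have ec': "\<forall>E\<in>set Es. P * (mat_adjoint E * Y * E) * P \<in> carrier_mat n n" using ec Pc Y by auto
  have "P * kd n Es Y * P = msum n (map (\<lambda>E. P * (mat_adjoint E * Y * E) * P) Es)"
    by (rule kd_sandwich[symmetric]) (use ec Pc Y in auto)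
  then have "(P * kd n Es Y * P) $$ (i,j) = (\<Sum>E\<leftarrow>Es. (P * (mat_adjoint E * Y * E) * P) $$ (i,j))"
    using msum_map_index[of Es "\<lambda>E. P * (mat_adjoint E * Y * E) * P" n i j] ec' i j by simp
  also have "\<dots> = (\<Sum>b<m. (P * (mat_adjoint (Es!b) * Y * Es!b) * P) $$ (i,j))"
    by (simp add: sum_list_sum_nth atLeast0LessThan)
  also have "\<dots> = (\<Sum>b<m. (mat_adjoint S * Y * S) $$ (b*n+i, b*n+j))"
  proof (intro sum.cong refl)
    fix b assume "b \<in> {..<m}" then have b: "b < m" by simp
    have E: "Es ! b \<in> carrier_mat n n" by (rule Ec[OF b])
    have "P * (mat_adjoint (Es!b) * Y * Es!b) * P = mat_adjoint (Es!b * P) * Y * (Es!b * P)"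
      using E Pc Y Ph by (simp add: assoc_mult_mat[of _ n n _ n _ n])
    also have "(\<dots>) $$ (i,j) = (mat_adjoint S * Y * S) $$ (b*n+i, b*n+j)"
      by (rule blk_sandwich[OF Sc Y _ _ Sblk[OF b] Sblk[OF b] i j]) (use E Pc block_lt[OF b i] block_lt[OF b j] in auto)
    finally show "(P * (mat_adjoint (Es!b) * Y * Es!b) * P) $$ (i,j) = (mat_adjoint S * Y * S) $$ (b*n+i, b*n+j)" .
  qed
  also have "\<dots> = ptr m n (mat_adjoint S * Y * S) $$ (i,j)" unfolding ptr_def using i j by simp
  finally show "(P * kd n Es Y * P) $$ (i,j) = ptr m n (mat_adjoint S * Y * S) $$ (i,j)" .
qed (use Pc ec Y in auto)

definition M :: cmat where "M = mat_adjoint S * S"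

lemma Mc: "M \<in> carrier_mat NN NN" unfolding M_def using Sc by (intro mult_carrier_mat) auto

lemma Mh: "mat_adjoint M = M" unfolding M_def using Sc adj_mult[of "mat_adjoint S" NN n S NN] by simp

lemma Mentry: assumes c: "c < m" and b: "b < m" and i: "i < n" and j: "j < n"
  shows "M $$ (c*n+i, b*n+j) = (P * mat_adjoint (Es ! c) * (Es ! b) * P) $$ (i,j)"
proof -
  have Ec': "Es ! c \<in> carrier_mat n n" and Eb': "Es ! b \<in> carrier_mat n n" using Ec c b by auto
  have "P * mat_adjoint (Es ! c) * (Es ! b) * P = mat_adjoint (Es!c * P) * 1\<^sub>m n * (Es!b * P)"
    using Ec' Eb' Pc Ph by (simp add: assoc_mult_mat[of _ n n _ n _ n])
  also have "(\<dots>) $$ (i,j) = (mat_adjoint S * 1\<^sub>m n * S) $$ (c*n+i, b*n+j)"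
    by (rule blk_sandwich[OF Sc one_carrier_mat _ _ Sblk[OF c] Sblk[OF b] i j]) (use Ec' Eb' Pc block_lt[OF c i] block_lt[OF b j] in auto)
  also have "mat_adjoint S * 1\<^sub>m n * S = M" unfolding M_def using Sc by simp
  finally show ?thesis by simp
qed

lemma Mcomm: assumes X: "X \<in> AA" shows "M * idt m n X = idt m n X * M"
proof (rule eq_matI)
  have Xc: "X \<in> carrier_mat n n" using X Asub by auto
  fix p q assume "p < dim_row (idt m n X * M)" "q < dim_col (idt m n X * M)"
  then have p: "p < NN" and q: "q < NN" using Mc by auto
  define c i b j where "c = p div n" "i = p mod n" "b = q div n" "j = q mod n"
  have ci: "c < m" "i < n" "b < m" "j < n" using p q unfolding c_i_b_j_def by (auto simp: block_div_lt block_mod_lt)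
  have pe: "p = c*n+i" and qe: "q = b*n+j" unfolding c_i_b_j_def by auto
  have Mcb: "(P * mat_adjoint (Es ! c) * (Es ! b) * P) \<in> carrier_mat n n" using Ec ci Pc by simp
  have "(M * idt m n X) $$ (p,q) = (\<Sum>l<n. M $$ (p, b*n + l) * X $$ (l, j))"
    unfolding c_i_b_j_def by (rule mult_idt_index[OF Mc Xc p q])
  also have "\<dots> = (\<Sum>l<n. (P * mat_adjoint (Es ! c) * (Es ! b) * P) $$ (i,l) * X $$ (l,j))"
    unfolding pe using ci by (intro sum.cong refl) (simp add: Mentry)
  also have "\<dots> = ((P * mat_adjoint (Es ! c) * (Es ! b) * P) * X) $$ (i,j)"
    by (rule mult_index_sum'[OF Mcb Xc ci(2) ci(4), symmetric])
  also have "\<dots> = (X * (P * mat_adjoint (Es ! c) * (Es ! b) * P)) $$ (i,j)" using cm X ci by auto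
  also have "\<dots> = (\<Sum>l<n. X $$ (i,l) * (P * mat_adjoint (Es ! c) * (Es ! b) * P) $$ (l,j))"
    by (rule mult_index_sum'[OF Xc Mcb ci(2) ci(4)])
  also have "\<dots> = (\<Sum>l<n. X $$ (i,l) * M $$ (c*n+l, q))"
    unfolding qe using ci by (intro sum.cong refl) (simp add: Mentry)
  also have "\<dots> = (idt m n X * M) $$ (p,q)"
    unfolding c_i_b_j_def by (rule idt_mult_index[OF Mc Xc p q, symmetric])
  finally show "(M * idt m n X) $$ (p,q) = (idt m n X * M) $$ (p,q)" .
qed (use Mc in auto)

end

lemma diagm_add: "diagm N f + diagm N g = diagm N (\<lambda>k. f k + g k)"
  by (rule eq_matI) (auto simp: diagm_def)

lemma diagm_one: "diagm N (\<lambda>k. 1) = 1\<^sub>m N"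
  by (rule eq_matI) (auto simp: diagm_def)

lemma diagm_zero: "diagm N (\<lambda>k. 0) = 0\<^sub>m N N"
  by (rule eq_matI) (auto simp: diagm_def)

lemma udu_mult: assumes V: "V \<in> carrier_mat N N" and VV: "mat_adjoint V * V = 1\<^sub>m N"
  shows "(V * diagm N f * mat_adjoint V) * (V * diagm N g * mat_adjoint V) = V * diagm N (\<lambda>k. f k * g k) * mat_adjoint V"
proof -
  note as = assoc_mult_mat[of _ N N _ N _ N]
  have "(V * diagm N f * mat_adjoint V) * (V * diagm N g * mat_adjoint V) = V * diagm N f * (mat_adjoint V * V) * diagm N g * mat_adjoint V"
    using V by (simp add: as)
  also have "\<dots> = V * (diagm N f * diagm N g) * mat_adjoint V" unfolding VV using V by (simp add: as)
  finally show ?thesis by (simp add: diagm_mult)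
qed

lemma udu_carrier[simp]: "V \<in> carrier_mat N N \<Longrightarrow> V * diagm N f * mat_adjoint V \<in> carrier_mat N N"
  by simp

lemma udu_adj: assumes V: "V \<in> carrier_mat N N"
  shows "mat_adjoint (V * diagm N f * mat_adjoint V) = V * diagm N f * mat_adjoint V"
  using V by (simp add: adj_mult[of _ N N _ N] assoc_mult_mat[of _ N N _ N _ N])

locale suff2 = suff +
  fixes V :: cmat and d :: "nat \<Rightarrow> real"
  assumes Vc: "V \<in> carrier_mat NN NN" and VV: "mat_adjoint V * V = 1\<^sub>m NN" and VV': "V * mat_adjoint V = 1\<^sub>m NN"
    and Me: "M = V * diagm NN d * mat_adjoint V"
begin

lemma dpos: assumes k: "k < NN" shows "d k \<ge> 0"
proof -
  note as = assoc_mult_mat[of _ NN NN _ NN _ NN]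
  have SV: "S * V \<in> carrier_mat n NN" using Sc Vc by (intro mult_carrier_mat) auto
  have "mat_adjoint V * M * V = (mat_adjoint V * V) * diagm NN d * (mat_adjoint V * V)"
    unfolding Me using Vc by (simp add: as)
  then have D: "mat_adjoint V * M * V = diagm NN d" unfolding VV by simp
  have "mat_adjoint V * M * V = mat_adjoint V * (M * V)"
    by (rule assoc_mult_mat[OF adj_carrier[OF Vc] Mc Vc])
  also have "M * V = mat_adjoint S * (S * V)"
    unfolding M_def by (rule assoc_mult_mat[OF adj_carrier[OF Sc] Sc Vc])
  finally have "mat_adjoint V * M * V = mat_adjoint V * (mat_adjoint S * (S * V))" .
  also have "\<dots> = mat_adjoint (S * V) * (S * V)"
    unfolding adj_mult[OF Sc Vc] by (rule assoc_mult_mat[OF adj_carrier[OF Vc] adj_carrier[OF Sc] SV, symmetric])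
  finally have D': "mat_adjoint (S * V) * (S * V) = diagm NN d" using D by simp
  have e1: "(mat_adjoint (S * V) * (S * V)) $$ (k,k) = complex_of_real (d k)" using D' k by (simp add: diagm_def)
  have e2: "(mat_adjoint (S * V) * (S * V)) $$ (k,k) = complex_of_real (\<Sum>i<n. (cmod ((S * V) $$ (i,k)))\<^sup>2)"
    by (rule adj_self_diag[OF SV k])
  have "complex_of_real (d k) = complex_of_real (\<Sum>i<n. (cmod ((S * V) $$ (i,k)))\<^sup>2)" using e1 e2 by metis
  then have "d k = (\<Sum>i<n. (cmod ((S * V) $$ (i,k)))\<^sup>2)" by (simp only: of_real_eq_iff)
  then show ?thesis by (simp add: sum_nonneg)
qed

definition B :: cmat where "B = V * diagm NN (\<lambda>k. sqrt (d k)) * mat_adjoint V"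
definition gg :: "nat \<Rightarrow> real" where "gg k = (if d k > 0 then 1 / sqrt (d k) else 0)"
definition hh :: "nat \<Rightarrow> real" where "hh k = (if d k > 0 then 1 else 0)"
definition G :: cmat where "G = V * diagm NN gg * mat_adjoint V"
definition U :: cmat where "U = S * G"

lemma Bc: "B \<in> carrier_mat NN NN" unfolding B_def using Vc by simp
lemma Gc: "G \<in> carrier_mat NN NN" unfolding G_def using Vc by simp
lemma Uc: "U \<in> carrier_mat n NN" unfolding U_def using Sc Gc by (intro mult_carrier_mat) auto
lemma Bh: "mat_adjoint B = B" unfolding B_def by (rule udu_adj[OF Vc])
lemma Gh: "mat_adjoint G = G" unfolding G_def by (rule udu_adj[OF Vc])

lemma BB: "B * B = M"
proof -
  have "B * B = V * diagm NN (\<lambda>k. sqrt (d k) * sqrt (d k)) * mat_adjoint V"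
    unfolding B_def by (rule udu_mult[OF Vc VV])
  also have "diagm NN (\<lambda>k. sqrt (d k) * sqrt (d k)) = diagm NN d"
    by (rule diagm_cong) (use dpos in simp)
  finally show ?thesis using Me by simp
qed

lemma Bcomm: assumes X: "X \<in> AA" shows "idt m n X * B = B * idt m n X"
  unfolding B_def
  by (rule diag_fun_commute[OF Vc VV VV' idt_carrier]) (use Mcomm[OF X] Me in simp)

lemma gd: "k < NN \<Longrightarrow> gg k * d k = sqrt (d k)"
  using dpos[of k] by (cases "d k > 0") (auto simp: gg_def real_div_sqrt)

lemma USB: "mat_adjoint U * S = B"
proof -
  have "mat_adjoint U = G * mat_adjoint S" unfolding U_def using adj_mult[OF Sc Gc] Gh by simp
  then have "mat_adjoint U * S = G * mat_adjoint S * S" by simp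
  also have "\<dots> = G * M" unfolding M_def by (rule assoc_mult_mat[OF Gc adj_carrier[OF Sc] Sc])
  also have "\<dots> = V * diagm NN (\<lambda>k. gg k * d k) * mat_adjoint V" unfolding G_def Me by (rule udu_mult[OF Vc VV])
  also have "diagm NN (\<lambda>k. gg k * d k) = diagm NN (\<lambda>k. sqrt (d k))"
    by (rule diagm_cong) (rule gd)
  finally show ?thesis unfolding B_def .
qed

definition H :: cmat where "H = V * diagm NN hh * mat_adjoint V"
definition H' :: cmat where "H' = V * diagm NN (\<lambda>k. 1 - hh k) * mat_adjoint V"

lemma Hc: "H \<in> carrier_mat NN NN" unfolding H_def using Vc by simp
lemma H'c: "H' \<in> carrier_mat NN NN" unfolding H'_def using Vc by simp

lemma GB: "G * B = H"
proof -
  have "G * B = V * diagm NN (\<lambda>k. gg k * sqrt (d k)) * mat_adjoint V" unfolding G_def B_def by (rule udu_mult[OF Vc VV])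
  also have "diagm NN (\<lambda>k. gg k * sqrt (d k)) = diagm NN hh"
    by (rule diagm_cong) (auto simp: gg_def hh_def)
  finally show ?thesis unfolding H_def .
qed

lemma BG: "B * G = H"
proof -
  have "B * G = V * diagm NN (\<lambda>k. sqrt (d k) * gg k) * mat_adjoint V" unfolding G_def B_def by (rule udu_mult[OF Vc VV])
  also have "diagm NN (\<lambda>k. sqrt (d k) * gg k) = diagm NN hh"
    by (rule diagm_cong) (auto simp: gg_def hh_def)
  finally show ?thesis unfolding H_def .
qed

lemma GH: "G * H = G"
proof -
  have "G * H = V * diagm NN (\<lambda>k. gg k * hh k) * mat_adjoint V" unfolding G_def H_def by (rule udu_mult[OF Vc VV])
  also have "diagm NN (\<lambda>k. gg k * hh k) = diagm NN gg"
    by (rule diagm_cong) (auto simp: gg_def hh_def)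
  finally show ?thesis unfolding G_def .
qed

lemma HH': "H + H' = 1\<^sub>m NN"
proof -
  have "H + H' = V * diagm NN hh * mat_adjoint V + V * diagm NN (\<lambda>k. 1 - hh k) * mat_adjoint V"
    unfolding H_def H'_def ..
  also have "\<dots> = (V * diagm NN hh + V * diagm NN (\<lambda>k. 1 - hh k)) * mat_adjoint V"
    by (rule add_mult_distrib_mat[symmetric, of _ NN NN]) (use Vc in auto)
  also have "V * diagm NN hh + V * diagm NN (\<lambda>k. 1 - hh k) = V * (diagm NN hh + diagm NN (\<lambda>k. 1 - hh k))"
    by (rule mult_add_distrib_mat[symmetric, of _ NN NN]) (use Vc in auto)
  also have "diagm NN hh + diagm NN (\<lambda>k. 1 - hh k) = 1\<^sub>m NN" unfolding diagm_add by (simp add: diagm_one)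
  finally show ?thesis using Vc VV' by simp
qed

lemma H'MH': "H' * M * H' = 0\<^sub>m NN NN"
proof -
  have "H' * M = V * diagm NN (\<lambda>k. (1 - hh k) * d k) * mat_adjoint V" unfolding H'_def Me by (rule udu_mult[OF Vc VV])
  then have "H' * M * H' = V * diagm NN (\<lambda>k. ((1 - hh k) * d k) * (1 - hh k)) * mat_adjoint V"
    unfolding H'_def by (simp add: udu_mult[OF Vc VV])
  also have "diagm NN (\<lambda>k. ((1 - hh k) * d k) * (1 - hh k)) = diagm NN (\<lambda>k. 0)"
  proof (rule diagm_cong)
    fix k assume k: "k < NN"
    show "((1 - hh k) * d k) * (1 - hh k) = 0" by (cases "d k > 0") (use dpos[OF k] in \<open>auto simp: hh_def\<close>)
  qed
  finally show ?thesis using Vc by (simp add: diagm_zero)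
qed

lemma SH: "S * H = S"
proof -
  define T where "T = S * H'"
  have Tc: "T \<in> carrier_mat n NN" unfolding T_def by (rule mult_carrier_mat[OF Sc H'c])
  have H'h: "mat_adjoint H' = H'" unfolding H'_def by (rule udu_adj[OF Vc])
  have "mat_adjoint T * T = H' * mat_adjoint S * (S * H')" unfolding T_def adj_mult[OF Sc H'c] H'h ..
  also have "\<dots> = H' * (mat_adjoint S * (S * H'))" by (rule assoc_mult_mat[OF H'c adj_carrier[OF Sc]]) (use Sc H'c in auto)
  also have "mat_adjoint S * (S * H') = M * H'" unfolding M_def by (rule assoc_mult_mat[OF adj_carrier[OF Sc] Sc H'c, symmetric])
  also have "H' * (M * H') = H' * M * H'" by (rule assoc_mult_mat[OF H'c Mc H'c, symmetric])
  finally have "mat_adjoint T * T = 0\<^sub>m NN NN" using H'MH' by simp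
  then have T0: "T = 0\<^sub>m n NN" by (rule adj_self_zero[OF Tc])
  have "S = S * (H + H')" using Sc HH' by simp
  also have "\<dots> = S * H + S * H'" by (rule mult_add_distrib_mat[OF Sc Hc H'c])
  finally show ?thesis using T0 T_def Sc Hc by simp
qed

lemma UB: "U * B = S"
proof -
  have "U * B = S * (G * B)" unfolding U_def by (rule assoc_mult_mat[OF Sc Gc Bc])
  then show ?thesis using GB SH by simp
qed

lemma UUU: "U * (mat_adjoint U * U) = U"
proof -
  have "mat_adjoint U * (S * G) = (mat_adjoint U * S) * G" by (rule assoc_mult_mat[OF adj_carrier[OF Uc] Sc Gc, symmetric])
  then have "mat_adjoint U * U = (mat_adjoint U * S) * G" by (simp add: U_def[symmetric])
  then have "mat_adjoint U * U = H" using USB BG by simp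
  then have "U * (mat_adjoint U * U) = S * (G * H)" unfolding U_def by (simp add: assoc_mult_mat[OF Sc Gc Hc])
  then show ?thesis using GH U_def by simp
qed

definition Pi :: cmat where "Pi = 1\<^sub>m n - U * mat_adjoint U"

lemma UUc: "U * mat_adjoint U \<in> carrier_mat n n" by (rule mult_carrier_mat[OF Uc adj_carrier[OF Uc]])
lemma Pic: "Pi \<in> carrier_mat n n" unfolding Pi_def using UUc by simp

lemma UUh: "mat_adjoint (U * mat_adjoint U) = U * mat_adjoint U"
  using adj_mult[OF Uc adj_carrier[OF Uc]] by simp

lemma Pih: "mat_adjoint Pi = Pi" unfolding Pi_def adj_minus[OF one_carrier_mat UUc] UUh by simp

lemma UUUU: "U * mat_adjoint U * (U * mat_adjoint U) = U * mat_adjoint U"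
proof -
  have "U * mat_adjoint U * (U * mat_adjoint U) = U * (mat_adjoint U * (U * mat_adjoint U))"
    by (rule assoc_mult_mat[OF Uc adj_carrier[OF Uc] UUc])
  also have "mat_adjoint U * (U * mat_adjoint U) = (mat_adjoint U * U) * mat_adjoint U"
    by (rule assoc_mult_mat[OF adj_carrier[OF Uc] Uc adj_carrier[OF Uc], symmetric])
  also have "U * (\<dots>) = (U * (mat_adjoint U * U)) * mat_adjoint U"
    by (rule assoc_mult_mat[symmetric, of _ n NN _ NN _ n]) (use Uc in auto)
  finally show ?thesis using UUU by simp
qed

lemma PiPi: "Pi * Pi = Pi"
proof -
  let ?W = "U * mat_adjoint U"
  have W: "?W \<in> carrier_mat n n" by (rule UUc)
  have "Pi * Pi = 1\<^sub>m n * Pi - ?W * Pi" unfolding Pi_def[of] by (rule minus_mult_distrib_mat[of _ n n _ _ n]) (use W in auto)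
  also have "?W * Pi = ?W * 1\<^sub>m n - ?W * ?W" unfolding Pi_def by (rule mult_minus_distrib_mat[of _ n n _ n]) (use W in auto)
  also have "\<dots> = 0\<^sub>m n n" using W UUUU by (simp add: right_mult_one_mat[OF W])
  finally show ?thesis using Pic by (intro eq_matI) auto
qed

lemma PiS: "Pi * S = 0\<^sub>m n NN"
proof -
  have "Pi * S = 1\<^sub>m n * S - U * mat_adjoint U * S" unfolding Pi_def by (rule minus_mult_distrib_mat[of _ n n]) (use UUc Sc in auto)
  also have "U * mat_adjoint U * S = U * (mat_adjoint U * S)" by (rule assoc_mult_mat[OF Uc adj_carrier[OF Uc] Sc])
  finally show ?thesis using USB UB Sc by simp
qed

definition Ub :: "nat \<Rightarrow> cmat" where "Ub a = mat n n (\<lambda>(r,i). U $$ (r, a*n+i))"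
definition Ks :: "cmat list" where "Ks = map (\<lambda>a. mat_adjoint (Ub a)) [0..<m] @ [Pi]"

lemma Ubc: "Ub a \<in> carrier_mat n n" unfolding Ub_def by simp
lemma Ub_dims[simp]: "dim_row (Ub a) = n" "dim_col (Ub a) = n" unfolding Ub_def by auto

lemma Ksc: "\<forall>K\<in>set Ks. K \<in> carrier_mat n n" unfolding Ks_def using Pic Ubc by auto

lemma UidtU: assumes Y: "Y \<in> carrier_mat n n"
  shows "U * idt m n Y * mat_adjoint U = msum n (map (\<lambda>a. Ub a * Y * mat_adjoint (Ub a)) [0..<m])"
proof (rule eq_matI)
  have UY: "U * idt m n Y \<in> carrier_mat n NN" by (rule mult_carrier_mat[OF Uc idt_carrier])
  have c: "\<forall>a\<in>set [0..<m]. Ub a * Y * mat_adjoint (Ub a) \<in> carrier_mat n n" using Ubc Y by auto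
  have mc: "msum n (map (\<lambda>a. Ub a * Y * mat_adjoint (Ub a)) [0..<m]) \<in> carrier_mat n n" using c by simp
  show "dim_row (U * idt m n Y * mat_adjoint U) = dim_row (msum n (map (\<lambda>a. Ub a * Y * mat_adjoint (Ub a)) [0..<m]))"
    "dim_col (U * idt m n Y * mat_adjoint U) = dim_col (msum n (map (\<lambda>a. Ub a * Y * mat_adjoint (Ub a)) [0..<m]))"
    using mc Uc by auto
  fix r s assume "r < dim_row (msum n (map (\<lambda>a. Ub a * Y * mat_adjoint (Ub a)) [0..<m]))"
    "s < dim_col (msum n (map (\<lambda>a. Ub a * Y * mat_adjoint (Ub a)) [0..<m]))"
  then have r: "r < n" and s: "s < n" using mc by auto
  have "(U * idt m n Y * mat_adjoint U) $$ (r,s) = (\<Sum>q<NN. (U * idt m n Y) $$ (r,q) * mat_adjoint U $$ (q,s))"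
    by (rule mult_index_sum'[OF UY adj_carrier[OF Uc] r s])
  also have "\<dots> = (\<Sum>a<m. \<Sum>j<n. (U * idt m n Y) $$ (r,a*n+j) * mat_adjoint U $$ (a*n+j,s))"
    by (rule sum_blocks)
  also have "\<dots> = (\<Sum>a<m. \<Sum>j<n. (\<Sum>l<n. Ub a $$ (r,l) * Y $$ (l,j)) * cnj (Ub a $$ (s,j)))"
  proof (intro sum.cong refl)
    fix a j assume a: "a \<in> {..<m}" and j: "j \<in> {..<n}"
    have q: "a*n+j < NN" using block_lt a j by auto
    have "(U * idt m n Y) $$ (r,a*n+j) = (\<Sum>l<n. U $$ (r, a*n + l) * Y $$ (l, j))"
      using mult_idt_index[OF Uc Y r q] j by simp
    also have "\<dots> = (\<Sum>l<n. Ub a $$ (r,l) * Y $$ (l,j))" using r by (intro sum.cong refl) (auto simp: Ub_def)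
    finally show "(U * idt m n Y) $$ (r,a*n+j) * mat_adjoint U $$ (a*n+j,s) = (\<Sum>l<n. Ub a $$ (r,l) * Y $$ (l,j)) * cnj (Ub a $$ (s,j))"
      using q s j Uc by (simp add: Ub_def)
  qed
  also have "\<dots> = (\<Sum>a<m. (Ub a * Y * mat_adjoint (Ub a)) $$ (r,s))"
  proof (intro sum.cong refl)
    fix a assume "a \<in> {..<m}"
    have UYc: "Ub a * Y \<in> carrier_mat n n" using Ubc Y by simp
    have "(Ub a * Y * mat_adjoint (Ub a)) $$ (r,s) = (\<Sum>j<n. (Ub a * Y) $$ (r,j) * mat_adjoint (Ub a) $$ (j,s))"
      by (rule mult_index_sum'[OF UYc adj_carrier[OF Ubc] r s])
    also have "\<dots> = (\<Sum>j<n. (\<Sum>l<n. Ub a $$ (r,l) * Y $$ (l,j)) * cnj (Ub a $$ (s,j)))"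
    proof (intro sum.cong refl)
      fix j assume "j \<in> {..<n}" then have j: "j < n" by simp
      show "(Ub a * Y) $$ (r,j) * mat_adjoint (Ub a) $$ (j,s) = (\<Sum>l<n. Ub a $$ (r,l) * Y $$ (l,j)) * cnj (Ub a $$ (s,j))"
        using mult_index_sum'[OF Ubc Y r j] j s by simp
    qed
    finally show "(\<Sum>j<n. (\<Sum>l<n. Ub a $$ (r,l) * Y $$ (l,j)) * cnj (Ub a $$ (s,j))) = (Ub a * Y * mat_adjoint (Ub a)) $$ (r,s)" by simp
  qed
  also have "\<dots> = (\<Sum>a\<leftarrow>[0..<m]. (Ub a * Y * mat_adjoint (Ub a)) $$ (r,s))"
    by (simp add: sum_set_upt_conv_sum_list_nat[symmetric] atLeast0LessThan)
  also have "\<dots> = msum n (map (\<lambda>a. Ub a * Y * mat_adjoint (Ub a)) [0..<m]) $$ (r,s)"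
    by (rule msum_map_index[symmetric]) (use c r s in auto)
  finally show "(U * idt m n Y * mat_adjoint U) $$ (r,s) = msum n (map (\<lambda>a. Ub a * Y * mat_adjoint (Ub a)) [0..<m]) $$ (r,s)" .
qed

lemma kdKs: assumes Y: "Y \<in> carrier_mat n n"
  shows "kd n Ks Y = U * idt m n Y * mat_adjoint U + Pi * Y * Pi"
proof -
  have c1: "\<forall>x\<in>set (map (\<lambda>a. mat_adjoint (Ub a)) [0..<m]). mat_adjoint x * Y * x \<in> carrier_mat n n"
    using Ubc Y by auto
  have "kd n Ks Y = msum n (map (\<lambda>K. mat_adjoint K * Y * K) (map (\<lambda>a. mat_adjoint (Ub a)) [0..<m]) @ [mat_adjoint Pi * Y * Pi])"
    unfolding kd_def Ks_def by simp
  also have "\<dots> = msum n (map (\<lambda>K. mat_adjoint K * Y * K) (map (\<lambda>a. mat_adjoint (Ub a)) [0..<m])) + msum n [mat_adjoint Pi * Y * Pi]"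
    by (rule msum_append) (use c1 Pic Y in auto)
  also have "map (\<lambda>K. mat_adjoint K * Y * K) (map (\<lambda>a. mat_adjoint (Ub a)) [0..<m]) = map (\<lambda>a. Ub a * Y * mat_adjoint (Ub a)) [0..<m]"
    by simp
  also have "msum n [mat_adjoint Pi * Y * Pi] = Pi * Y * Pi" unfolding Pih using Pic Y by simp
  finally show ?thesis using UidtU[OF Y] by simp
qed

lemma kdKs1: "kd n Ks (1\<^sub>m n) = 1\<^sub>m n"
proof -
  have "kd n Ks (1\<^sub>m n) = U * 1\<^sub>m NN * mat_adjoint U + Pi * 1\<^sub>m n * Pi"
    using kdKs[OF one_carrier_mat] idt_one by simp
  also have "\<dots> = U * mat_adjoint U + Pi" using Uc Pic PiPi by simp
  also have "\<dots> = 1\<^sub>m n" unfolding Pi_def using UUc by (intro eq_matI) auto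
  finally show ?thesis .
qed

lemma SU: "mat_adjoint S * U = B"
proof -
  have "mat_adjoint S * U = mat_adjoint (mat_adjoint U * S)" using adj_mult[OF adj_carrier[OF Uc] Sc] by simp
  then show ?thesis using USB Bh by simp
qed

lemma recover: assumes X: "X \<in> AA" shows "P * kd n Es (kd n Ks X) * P = P * X * P"
proof -
  have Xc: "X \<in> carrier_mat n n" using X Asub by auto
  let ?W1 = "U * idt m n X * mat_adjoint U"
  let ?W2 = "Pi * X * Pi"
  have W1c: "?W1 \<in> carrier_mat n n" using Uc by (intro mult_carrier_mat[of _ n NN]) (auto intro: mult_carrier_mat[OF Uc idt_carrier])
  have W2c: "?W2 \<in> carrier_mat n n" using Pic Xc by simp
  have kc: "kd n Ks X \<in> carrier_mat n n" using Ksc Xc by simp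
  have SW1: "mat_adjoint S * ?W1 * S = idt m n X * M"
  proof -
    have Sa: "mat_adjoint S \<in> carrier_mat NN n" using Sc by simp
    have Ua: "mat_adjoint U \<in> carrier_mat NN n" using Uc by simp
    have UI: "U * idt m n X \<in> carrier_mat n NN" by (rule mult_carrier_mat[OF Uc idt_carrier])
    have SU': "mat_adjoint S * U \<in> carrier_mat NN NN" by (rule mult_carrier_mat[OF Sa Uc])
    have SUI: "mat_adjoint S * U * idt m n X \<in> carrier_mat NN NN" by (rule mult_carrier_mat[OF SU' idt_carrier])
    have "mat_adjoint S * ?W1 = mat_adjoint S * (U * idt m n X) * mat_adjoint U"
      by (rule assoc_mult_mat[OF Sa UI Ua, symmetric])
    also have "mat_adjoint S * (U * idt m n X) = mat_adjoint S * U * idt m n X"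
      by (rule assoc_mult_mat[OF Sa Uc idt_carrier, symmetric])
    finally have "mat_adjoint S * ?W1 * S = mat_adjoint S * U * idt m n X * mat_adjoint U * S" by simp
    also have "\<dots> = (mat_adjoint S * U) * idt m n X * (mat_adjoint U * S)"
      by (rule assoc_mult_mat[OF SUI Ua Sc])
    finally have "mat_adjoint S * ?W1 * S = (mat_adjoint S * U) * idt m n X * (mat_adjoint U * S)" .
    also have "\<dots> = B * idt m n X * B" unfolding SU USB ..
    also have "\<dots> = idt m n X * B * B" using Bcomm[OF X] by simp
    also have "\<dots> = idt m n X * M" using BB Bc by (simp add: assoc_mult_mat[OF idt_carrier Bc Bc])
    finally show ?thesis .
  qed
  have SW2: "mat_adjoint S * ?W2 * S = 0\<^sub>m NN NN"
  proof -
    have SP: "mat_adjoint S * Pi = 0\<^sub>m NN n"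
    proof -
      have "mat_adjoint S * Pi = mat_adjoint (Pi * S)" using adj_mult[OF Pic Sc] Pih by simp
      then show ?thesis using PiS by simp
    qed
    have Sa: "mat_adjoint S \<in> carrier_mat NN n" using Sc by simp
    have PX: "Pi * X \<in> carrier_mat n n" using Pic Xc by simp
    have SPX: "mat_adjoint S * Pi * X \<in> carrier_mat NN n" using Sa Pic Xc by (intro mult_carrier_mat) auto
    have "mat_adjoint S * ?W2 = mat_adjoint S * (Pi * X) * Pi" by (rule assoc_mult_mat[OF Sa PX Pic, symmetric])
    also have "mat_adjoint S * (Pi * X) = mat_adjoint S * Pi * X" by (rule assoc_mult_mat[OF Sa Pic Xc, symmetric])
    finally have "mat_adjoint S * ?W2 * S = mat_adjoint S * Pi * X * Pi * S" by simp
    also have "\<dots> = (mat_adjoint S * Pi * X) * (Pi * S)" by (rule assoc_mult_mat[OF SPX Pic Sc])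
    finally have "mat_adjoint S * ?W2 * S = (mat_adjoint S * Pi) * X * (Pi * S)" .
    then show ?thesis unfolding SP PiS using Xc by simp
  qed
  have "P * kd n Es (kd n Ks X) * P = ptr m n (mat_adjoint S * kd n Ks X * S)" by (rule L2[OF kc])
  also have "mat_adjoint S * kd n Ks X * S = mat_adjoint S * ?W1 * S + mat_adjoint S * ?W2 * S"
  proof -
    have "mat_adjoint S * (?W1 + ?W2) = mat_adjoint S * ?W1 + mat_adjoint S * ?W2"
      by (rule mult_add_distrib_mat[OF adj_carrier[OF Sc] W1c W2c])
    then have "mat_adjoint S * (?W1 + ?W2) * S = (mat_adjoint S * ?W1 + mat_adjoint S * ?W2) * S" by simp
    also have "\<dots> = mat_adjoint S * ?W1 * S + mat_adjoint S * ?W2 * S"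
      by (rule add_mult_distrib_mat[OF mult_carrier_mat[OF adj_carrier[OF Sc] W1c] mult_carrier_mat[OF adj_carrier[OF Sc] W2c] Sc])
    finally show ?thesis unfolding kdKs[OF Xc] .
  qed
  also have "\<dots> = idt m n X * M" unfolding SW1 SW2 using Mc by simp
  also have "ptr m n (idt m n X * M) = X * ptr m n M" by (rule ptr_idt[OF Mc Xc])
  also have "ptr m n M = P"
  proof -
    have "ptr m n M = ptr m n (mat_adjoint S * 1\<^sub>m n * S)" unfolding M_def using Sc by simp
    also have "\<dots> = P * kd n Es (1\<^sub>m n) * P" by (rule L2[symmetric]) simp
    also have "kd n Es (1\<^sub>m n) = 1\<^sub>m n" using kd_one[OF ec] es by simp
    finally show ?thesis using Pc PP by simp
  qed
  also have "X * P = P * X * P"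
  proof -
    have "X * P = (P * X * P) * P" using APA X by simp
    also have "\<dots> = P * X * (P * P)" using Pc Xc by (simp add: assoc_mult_mat[of _ n n _ n _ n])
    finally show ?thesis using PP by simp
  qed
  finally show ?thesis .
qed

end

lemma sufficiency:
  assumes op: "orth_proj n P" and ec: "\<forall>E \<in> set Es. E \<in> carrier_mat n n"
    and es: "msum n (map (\<lambda>E. mat_adjoint E * E) Es) = 1\<^sub>m n"
    and sa: "star_subalgebra_on n P \<A>"
    and cm: "\<forall>X \<in> \<A>. \<forall>b < length Es. \<forall>c < length Es.
            (P * mat_adjoint (Es ! c) * (Es ! b) * P) * X = X * (P * mat_adjoint (Es ! c) * (Es ! b) * P)"
  shows "\<exists>R. channel n R \<and> (\<forall>X \<in> \<A>. P * dual_map n (R \<circ> kraus_map n Es) X * P = P * X * P)"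
proof -
  interpret suff n P Es \<A> using assms by unfold_locales
  obtain V d where Vc: "V \<in> carrier_mat NN NN" and VV: "mat_adjoint V * V = 1\<^sub>m NN" and VV': "V * mat_adjoint V = 1\<^sub>m NN"
    and Me: "M = V * diagm NN d * mat_adjoint V"
    using hermitian_decomp[OF Mc Mh] by blast
  interpret suff2 n P Es \<A> V d using Vc VV VV' Me by unfold_locales
  have ch: "channel n (kraus_map n Ks)" by (rule kraus_channel[OF Ksc kdKs1])
  have "\<forall>X \<in> \<A>. P * dual_map n (kraus_map n Ks \<circ> kraus_map n Es) X * P = P * X * P"
  proof
    fix X assume X: "X \<in> \<A>"
    have Xc: "X \<in> carrier_mat n n" using X Asub by auto
    have "dual_map n (kraus_map n Ks \<circ> kraus_map n Es) X = kd n Es (kd n Ks X)"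
      by (rule dual_comp_kraus[OF Ksc ec _ Xc]) simp
    then show "P * dual_map n (kraus_map n Ks \<circ> kraus_map n Es) X * P = P * X * P"
      using recover[OF X] by simp
  qed
  then show ?thesis using ch by blast
qed

theorem theorem2:
  fixes n :: nat and P :: "complex mat" and Es :: "complex mat list"
    and \<A> :: "complex mat set"
  assumes "orth_proj n P"
    and "\<forall>E \<in> set Es. E \<in> carrier_mat n n"
    and "msum n (map (\<lambda>E. mat_adjoint E * E) Es) = 1\<^sub>m n"
    and "star_subalgebra_on n P \<A>"
  shows "(\<exists>R. channel n R \<and>
            (\<forall>X \<in> \<A>. P * dual_map n (R \<circ> kraus_map n Es) X * P = P * X * P))
     \<longleftrightarrow> (\<forall>X \<in> \<A>. \<forall>b < length Es. \<forall>c < length Es.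
            (P * mat_adjoint (Es ! c) * (Es ! b) * P) * X = X * (P * mat_adjoint (Es ! c) * (Es ! b) * P))"
proof
  assume "\<exists>R. channel n R \<and> (\<forall>X \<in> \<A>. P * dual_map n (R \<circ> kraus_map n Es) X * P = P * X * P)"
  then obtain R where "channel n R" "\<forall>X \<in> \<A>. P * dual_map n (R \<circ> kraus_map n Es) X * P = P * X * P" by blast
  then show "\<forall>X \<in> \<A>. \<forall>b < length Es. \<forall>c < length Es.
            (P * mat_adjoint (Es ! c) * (Es ! b) * P) * X = X * (P * mat_adjoint (Es ! c) * (Es ! b) * P)"
    using necessity assms by blast
next
  assume "\<forall>X \<in> \<A>. \<forall>b < length Es. \<forall>c < length Es.
            (P * mat_adjoint (Es ! c) * (Es ! b) * P) * X = X * (P * mat_adjoint (Es ! c) * (Es ! b) * P)"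
  then show "\<exists>R. channel n R \<and> (\<forall>X \<in> \<A>. P * dual_map n (R \<circ> kraus_map n Es) X * P = P * X * P)"
    using sufficiency assms by blast
qed

end
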